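(* Assume $\mathfrak g$ is noncompact and has no nonzero proper $\sigma$-stable ideals. Let $Y\in\mathfrak t^+$, $a=\exp Y$, $\sigma_a=\mathrm{Ad}(a)\sigma\mathrm{Ad}(a)^{-1}=\sigma\,\mathrm{Ad}(a)^{-2}$ and $\tau=\sigma\theta$. Then $$\mathfrak g^{\tau\sigma_a}=\{X\in\mathfrak g\mid\tau\sigma_aX=X\}=\mathfrak z_{\mathfrak k}(Y)=\{X\in\mathfrak k\mid[Y,X]=0\}.$$ Moreover $\mathfrak g^{\tau\sigma_a}=(\mathfrak h'\cap\mathrm{Ad}(a)\mathfrak h)\oplus(\mathfrak q'\cap\mathrm{Ad}(a)\mathfrak q)$, so that both $\mathfrak h'\cap\mathrm{Ad}(a)\mathfrak h$ and $\mathfrak q'\cap\mathrm{Ad}(a)\mathfrak q$ are contained in $\mathfrak k$.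
   Context: Let $G$ be a connected real semisimple Lie group with Lie algebra $\mathfrak g$. Let $\sigma$ be an involution of $G$ and $\theta$ a Cartan involution with $\sigma\theta=\theta\sigma$; the same letters denote the induced involutions of $\mathfrak g$. Let $\mathfrak g=\mathfrak k\oplus\mathfrak m$ and $\mathfrak g=\mathfrak h\oplus\mathfrak q$ be the $\pm1$-eigenspace decompositions for $\theta$ and $\sigma$. Put $\mathfrak h'=(\mathfrak k\cap\mathfrak h)\oplus(\mathfrak m\cap\mathfrak q)$ and $\mathfrak q'=(\mathfrak k\cap\mathfrak q)\oplus(\mathfrak m\cap\mathfrak h)$; these are the $\pm1$-eigenspaces of $\sigma\theta$. Let $\mathfrak t$ be a maximal abelian subspace of $\mathfrak k\cap\mathfrak q$. For a linear form $\alpha:\mathfrak t\to i\mathbb R$ put - $\mathfrak g_\mathbb C(\mathfrak t,\alpha)=\{X\in\mathfrak g_\mathbb C\mid[Y,X]=\alpha(Y)X\ \forall Y\in\mathfrak t\}$, - $\mathfrak m_\mathbb C(\mathfrak t,\alpha)=\mathfrak g_\mathbb C(\mathfrak t,\alpha)\cap\mathfrak m_\mathbb C$. Let $\Sigma(\mathfrak m_\mathbb C,\mathfrak t)=\{\alpha\ne0\mid\mathfrak m_\mathbb C(\mathfrak t,\alpha)\ne\{0\}\}$ and $\mathfrak t^+=\{Y\in\mathfrak t\mid|\alpha(Y)|<\pi/2\ \forall\alpha\in\Sigma(\mathfrak m_\mathbb C,\mathfrak t)\}$. *)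

theory Defs
  imports "HOL-Analysis.Analysis"
begin

text \<open>A finite-dimensional real Lie algebra is modelled as a Euclidean space 'g
  carrying a bracket br.\<close>

definition lie_bracket :: "('g::euclidean_space \<Rightarrow> 'g \<Rightarrow> 'g) \<Rightarrow> bool" where
  "lie_bracket br \<longleftrightarrow> (\<forall>x. linear (br x)) \<and> (\<forall>y. linear (\<lambda>x. br x y)) \<and>
     (\<forall>x. br x x = 0) \<and>
     (\<forall>x y z. br x (br y z) + br y (br z x) + br z (br x y) = 0)"

definition lin_trace :: "('g::euclidean_space \<Rightarrow> 'g) \<Rightarrow> real" where
  "lin_trace f = (\<Sum>b\<in>Basis. f b \<bullet> b)"

definition killing :: "('g::euclidean_space \<Rightarrow> 'g \<Rightarrow> 'g) \<Rightarrow> 'g \<Rightarrow> 'g \<Rightarrow> real" where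
  "killing br X Z = lin_trace (\<lambda>W. br X (br Z W))"

definition lie_ideal :: "('g::euclidean_space \<Rightarrow> 'g \<Rightarrow> 'g) \<Rightarrow> 'g set \<Rightarrow> bool" where
  "lie_ideal br I \<longleftrightarrow> subspace I \<and> (\<forall>x y. y \<in> I \<longrightarrow> br x y \<in> I)"

definition derived :: "('g::euclidean_space \<Rightarrow> 'g \<Rightarrow> 'g) \<Rightarrow> 'g set \<Rightarrow> 'g set" where
  "derived br I = span {br x y | x y. x \<in> I \<and> y \<in> I}"

definition solvable_ideal :: "('g::euclidean_space \<Rightarrow> 'g \<Rightarrow> 'g) \<Rightarrow> 'g set \<Rightarrow> bool" where
  "solvable_ideal br I \<longleftrightarrow> lie_ideal br I \<and> (\<exists>k. (derived br ^^ k) I = {0})"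

definition semisimple :: "('g::euclidean_space \<Rightarrow> 'g \<Rightarrow> 'g) \<Rightarrow> bool" where
  "semisimple br \<longleftrightarrow> lie_bracket br \<and> (\<forall>I. solvable_ideal br I \<longrightarrow> I = {0})"

text \<open>A semisimple Lie algebra is compact iff its Killing form is negative definite.\<close>
definition lie_compact :: "('g::euclidean_space \<Rightarrow> 'g \<Rightarrow> 'g) \<Rightarrow> bool" where
  "lie_compact br \<longleftrightarrow> (\<forall>X. X \<noteq> 0 \<longrightarrow> killing br X X < 0)"

definition lie_aut :: "('g::euclidean_space \<Rightarrow> 'g \<Rightarrow> 'g) \<Rightarrow> ('g \<Rightarrow> 'g) \<Rightarrow> bool" where
  "lie_aut br f \<longleftrightarrow> linear f \<and> bij f \<and> (\<forall>x y. f (br x y) = br (f x) (f y))"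

definition lie_involution :: "('g::euclidean_space \<Rightarrow> 'g \<Rightarrow> 'g) \<Rightarrow> ('g \<Rightarrow> 'g) \<Rightarrow> bool" where
  "lie_involution br s \<longleftrightarrow> lie_aut br s \<and> (\<forall>x. s (s x) = x)"

definition cartan_involution :: "('g::euclidean_space \<Rightarrow> 'g \<Rightarrow> 'g) \<Rightarrow> ('g \<Rightarrow> 'g) \<Rightarrow> bool" where
  "cartan_involution br \<theta> \<longleftrightarrow> lie_involution br \<theta> \<and>
     (\<forall>X. X \<noteq> 0 \<longrightarrow> - killing br X (\<theta> X) > 0)"

definition eig1 :: "('g::real_vector \<Rightarrow> 'g) \<Rightarrow> 'g set" where
  "eig1 f = {X. f X = X}"

definition eigm1 :: "('g::real_vector \<Rightarrow> 'g) \<Rightarrow> 'g set" where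
  "eigm1 f = {X. f X = - X}"

text \<open>exp(ad Y) as a power series; Ad(exp Y) = exp(ad Y).\<close>
definition exp_ad :: "('g::euclidean_space \<Rightarrow> 'g \<Rightarrow> 'g) \<Rightarrow> 'g \<Rightarrow> 'g \<Rightarrow> 'g" where
  "exp_ad br Y X = (\<Sum>n. ((br Y) ^^ n) X /\<^sub>R fact n)"

definition max_abelian :: "('g::euclidean_space \<Rightarrow> 'g \<Rightarrow> 'g) \<Rightarrow> 'g set \<Rightarrow> 'g set \<Rightarrow> bool" where
  "max_abelian br t S \<longleftrightarrow> subspace t \<and> t \<subseteq> S \<and> (\<forall>x\<in>t. \<forall>y\<in>t. br x y = 0) \<and>
     (\<forall>u. subspace u \<and> t \<subseteq> u \<and> u \<subseteq> S \<and> (\<forall>x\<in>u. \<forall>y\<in>u. br x y = 0) \<longrightarrow> u = t)"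

text \<open>A root alpha = i*beta in Sigma(m_C, t): there is a nonzero X = X1 + i X2 in m_C with
  [Z, X] = i beta(Z) X for all Z in t, i.e. [Z,X1] = -beta(Z) X2 and [Z,X2] = beta(Z) X1;
  and alpha is nonzero on t.\<close>
definition m_root :: "('g::euclidean_space \<Rightarrow> 'g \<Rightarrow> 'g) \<Rightarrow> 'g set \<Rightarrow> 'g set \<Rightarrow> ('g \<Rightarrow> real) \<Rightarrow> bool" where
  "m_root br t m \<beta> \<longleftrightarrow>
     (\<exists>X1\<in>m. \<exists>X2\<in>m. (X1 \<noteq> 0 \<or> X2 \<noteq> 0) \<and>
        (\<forall>Z\<in>t. br Z X1 = - (\<beta> Z *\<^sub>R X2) \<and> br Z X2 = \<beta> Z *\<^sub>R X1)) \<and>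
     (\<exists>Z\<in>t. \<beta> Z \<noteq> 0)"

definition t_plus :: "('g::euclidean_space \<Rightarrow> 'g \<Rightarrow> 'g) \<Rightarrow> 'g set \<Rightarrow> 'g set \<Rightarrow> 'g set" where
  "t_plus br t m = {Y\<in>t. \<forall>\<beta>. m_root br t m \<beta> \<longrightarrow> \<bar>\<beta> Y\<bar> < pi / 2}"

end

theory Submission
  imports Defs
begin

section \<open>Trace\<close>

lemma lin_trace_comm:
  fixes f g :: "'g::euclidean_space \<Rightarrow> 'g"
  assumes f: "linear f" and g: "linear g"
  shows "lin_trace (\<lambda>x. f (g x)) = lin_trace (\<lambda>x. g (f x))"
proof -
  have e: "\<And>u. u = (\<Sum>c\<in>Basis. (u \<bullet> c) *\<^sub>R c)" for u :: 'g
    by (simp add: euclidean_representation)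
  have 1: "f (g b) \<bullet> b = (\<Sum>c\<in>Basis. (g b \<bullet> c) * (f c \<bullet> b))" if "b \<in> Basis" for b
  proof -
    have "f (g b) = f (\<Sum>c\<in>Basis. (g b \<bullet> c) *\<^sub>R c)" using e[of "g b"] by simp
    also have "\<dots> = (\<Sum>c\<in>Basis. (g b \<bullet> c) *\<^sub>R f c)"
      by (simp add: linear_sum[OF f] linear_scale[OF f])
    finally show ?thesis by (simp add: inner_sum_left)
  qed
  have 2: "g (f b) \<bullet> b = (\<Sum>c\<in>Basis. (f b \<bullet> c) * (g c \<bullet> b))" if "b \<in> Basis" for b
  proof -
    have "g (f b) = g (\<Sum>c\<in>Basis. (f b \<bullet> c) *\<^sub>R c)" using e[of "f b"] by simp
    also have "\<dots> = (\<Sum>c\<in>Basis. (f b \<bullet> c) *\<^sub>R g c)"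
      by (simp add: linear_sum[OF g] linear_scale[OF g])
    finally show ?thesis by (simp add: inner_sum_left)
  qed
  have "lin_trace (\<lambda>x. f (g x)) = (\<Sum>b\<in>Basis. \<Sum>c\<in>Basis. (g b \<bullet> c) * (f c \<bullet> b))"
    unfolding lin_trace_def using 1 by (rule sum.cong[OF refl])
  also have "\<dots> = (\<Sum>c\<in>Basis. \<Sum>b\<in>Basis. (g b \<bullet> c) * (f c \<bullet> b))"
    by (rule sum.swap)
  also have "\<dots> = (\<Sum>c\<in>Basis. \<Sum>b\<in>Basis. (f c \<bullet> b) * (g b \<bullet> c))"
    by (simp add: mult.commute)
  also have "\<dots> = lin_trace (\<lambda>x. g (f x))"
    unfolding lin_trace_def using 2 by (simp)
  finally show ?thesis .
qed

lemma lin_trace_add: "lin_trace (\<lambda>x. f x + g x) = lin_trace f + lin_trace g"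
  by (simp add: lin_trace_def inner_add_left sum.distrib)

lemma lin_trace_diff: "lin_trace (\<lambda>x. f x - g x) = lin_trace f - lin_trace g"
  by (simp add: lin_trace_def inner_diff_left sum_subtractf)

lemma lin_trace_scale: "lin_trace (\<lambda>x. c *\<^sub>R f x) = c * lin_trace f"
  by (simp add: lin_trace_def sum_distrib_left)

locale lieB =
  fixes br :: "'g::euclidean_space \<Rightarrow> 'g \<Rightarrow> 'g"
  assumes lb: "lie_bracket br"
begin

lemma lin_r: "linear (br x)" using lb unfolding lie_bracket_def by blast
lemma lin_l: "linear (\<lambda>x. br x y)" using lb unfolding lie_bracket_def by blast

lemma add_r: "br x (a + b) = br x a + br x b" by (rule linear_add[OF lin_r])
lemma add_l: "br (a + b) y = br a y + br b y" using linear_add[OF lin_l[of y]] by simp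
lemma diff_r: "br x (a - b) = br x a - br x b" by (rule linear_diff[OF lin_r])
lemma diff_l: "br (a - b) y = br a y - br b y" using linear_diff[OF lin_l[of y]] by simp
lemma scale_r: "br x (c *\<^sub>R a) = c *\<^sub>R br x a" by (rule linear_scale[OF lin_r])
lemma scale_l: "br (c *\<^sub>R a) y = c *\<^sub>R br a y" using linear_scale[OF lin_l[of y]] by simp
lemma neg_r: "br x (- a) = - br x a" by (rule linear_neg[OF lin_r])
lemma neg_l: "br (- a) y = - br a y" using linear_neg[OF lin_l[of y]] by simp
lemma zero_r: "br x 0 = 0" by (rule linear_0[OF lin_r])
lemma zero_l: "br 0 y = 0" using linear_0[OF lin_l[of y]] by simp
lemma sum_r: "br x (sum f A) = (\<Sum>a\<in>A. br x (f a))" by (rule linear_sum[OF lin_r])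

lemmas br_simps = add_r add_l diff_r diff_l scale_r scale_l neg_r neg_l zero_r zero_l

lemma self: "br x x = 0" using lb unfolding lie_bracket_def by blast

lemma anti: "br x y = - br y x"
proof -
  have "br (x + y) (x + y) = 0" by (rule self)
  also have "br (x + y) (x + y) = br x x + br x y + (br y x + br y y)" by (simp add: br_simps)
  finally have "br x y + br y x = 0" by (simp add: self)
  thus ?thesis by (simp add: eq_neg_iff_add_eq_0)
qed

lemma jacobi: "br x (br y z) + br y (br z x) + br z (br x y) = 0"
  using lb unfolding lie_bracket_def by blast

lemma deriv: "br x (br y z) = br (br x y) z + br y (br x z)"
proof -
  have "br x (br y z) + br y (br z x) + br z (br x y) = 0" by (rule jacobi)
  moreover have "br y (br z x) = - br y (br x z)" by (metis anti neg_r)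
  moreover have "br z (br x y) = - br (br x y) z" by (rule anti)
  ultimately show ?thesis by (simp add: algebra_simps eq_neg_iff_add_eq_0)
qed

lemma ad_bracket: "br (br x y) w = br x (br y w) - br y (br x w)"
  using deriv[of x y w] by (simp add: algebra_simps)

section \<open>Killing form\<close>

lemma killing_sym: "killing br X Z = killing br Z X"
  unfolding killing_def by (rule lin_trace_comm[OF lin_r lin_r])

lemma killing_add_l: "killing br (X + X') Z = killing br X Z + killing br X' Z"
  unfolding killing_def by (simp add: add_l lin_trace_add)
lemma killing_scale_l: "killing br (c *\<^sub>R X) Z = c * killing br X Z"
  unfolding killing_def by (simp add: scale_l lin_trace_scale)
lemma killing_add_r: "killing br Z (X + X') = killing br Z X + killing br Z X'"
  using killing_add_l killing_sym by metis
lemma killing_scale_r: "killing br Z (c *\<^sub>R X) = c * killing br Z X"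
  using killing_scale_l killing_sym by metis

lemma linear_killing_l: "linear (\<lambda>X. killing br X Z)"
  by (rule linearI) (simp_all add: killing_add_l killing_scale_l)
lemma linear_killing_r: "linear (\<lambda>X. killing br Z X)"
  by (rule linearI) (simp_all add: killing_add_r killing_scale_r)

lemma lin_comp: "linear (\<lambda>w. br a (br b w))"
  using linear_compose[OF lin_r[of b] lin_r[of a]] by (simp add: o_def)

lemma killing_inv: "killing br (br X Z) W = killing br X (br Z W)"
proof -
  have "killing br (br X Z) W = lin_trace (\<lambda>w. br X (br Z (br W w)) - br Z (br X (br W w)))"
    unfolding killing_def by (simp add: ad_bracket)
  also have "\<dots> = lin_trace (\<lambda>w. br X (br Z (br W w))) - lin_trace (\<lambda>w. br Z (br X (br W w)))"
    by (rule lin_trace_diff)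
  also have "lin_trace (\<lambda>w. br Z (br X (br W w))) = lin_trace (\<lambda>w. br X (br W (br Z w)))"
    using lin_trace_comm[OF lin_r[of Z] lin_comp[of X W]] by simp
  also have "lin_trace (\<lambda>w. br X (br Z (br W w))) - lin_trace (\<lambda>w. br X (br W (br Z w)))
      = lin_trace (\<lambda>w. br X (br Z (br W w)) - br X (br W (br Z w)))"
    by (rule lin_trace_diff[symmetric])
  also have "\<dots> = killing br X (br Z W)"
    unfolding killing_def by (simp add: ad_bracket diff_r)
  finally show ?thesis .
qed

lemma killing_skew: "killing br (br Y X) Z = - killing br X (br Y Z)"
proof -
  have "killing br (br Y X) Z = - killing br (br X Y) Z"
    by (metis anti killing_scale_l scaleR_minus1_left mult_minus1)
  thus ?thesis by (simp add: killing_inv)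
qed

lemma killing_aut:
  assumes "lie_aut br \<phi>"
  shows "killing br (\<phi> X) (\<phi> Z) = killing br X Z"
proof -
  have l: "linear \<phi>" and b: "bij \<phi>" and h: "\<And>x y. \<phi> (br x y) = br (\<phi> x) (\<phi> y)"
    using assms unfolding lie_aut_def by auto
  define \<psi> where "\<psi> = inv \<phi>"
  have li: "linear \<psi>" unfolding \<psi>_def using l b by (simp add: bij_is_inj inj_linear_imp_inv_linear)
  have pp: "\<phi> (\<psi> w) = w" for w unfolding \<psi>_def using b by (simp add: bij_is_surj surj_f_inv_f)
  have qq: "\<psi> (\<phi> w) = w" for w unfolding \<psi>_def using b by (simp add: bij_is_inj inv_f_f)
  have "br (\<phi> X) (br (\<phi> Z) w) = \<phi> (br X (br Z (\<psi> w)))" for w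
    by (metis h pp)
  hence "killing br (\<phi> X) (\<phi> Z) = lin_trace (\<lambda>w. \<phi> (br X (br Z (\<psi> w))))"
    unfolding killing_def by simp
  also have "\<dots> = lin_trace (\<lambda>w. br X (br Z (\<psi> (\<phi> w))))"
    using lin_trace_comm[OF l, of "\<lambda>w. br X (br Z (\<psi> w))"]
      linear_compose[OF li lin_comp[of X Z]] by (simp add: o_def)
  also have "\<dots> = killing br X Z" unfolding killing_def qq by simp
  finally show ?thesis .
qed
end


locale ipform =
  fixes B :: "'g::euclidean_space \<Rightarrow> 'g \<Rightarrow> real"
  assumes lin_Bl: "linear (\<lambda>x. B x y)" and lin_Br: "linear (B x)"
    and symm: "B x y = B y x" and pos: "x \<noteq> 0 \<Longrightarrow> B x x > 0"
begin

lemma B_add_l: "B (a + b) y = B a y + B b y" using linear_add[OF lin_Bl[of y]] by simp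
lemma B_add_r: "B x (a + b) = B x a + B x b" by (rule linear_add[OF lin_Br])
lemma B_diff_l: "B (a - b) y = B a y - B b y" using linear_diff[OF lin_Bl[of y]] by simp
lemma B_diff_r: "B x (a - b) = B x a - B x b" by (rule linear_diff[OF lin_Br])
lemma B_scale_l: "B (c *\<^sub>R a) y = c * B a y" using linear_scale[OF lin_Bl[of y]] by simp
lemma B_scale_r: "B x (c *\<^sub>R a) = c * B x a" using linear_scale[OF lin_Br] by simp
lemma B_neg_l: "B (- a) y = - B a y" using linear_neg[OF lin_Bl[of y]] by simp
lemma B_neg_r: "B x (- a) = - B x a" using linear_neg[OF lin_Br] by simp
lemma B_zero_l: "B 0 y = 0" using linear_0[OF lin_Bl[of y]] by simp
lemma B_zero_r: "B x 0 = 0" using linear_0[OF lin_Br] by simp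
lemmas B_simps = B_add_l B_add_r B_diff_l B_diff_r B_scale_l B_scale_r B_neg_l B_neg_r B_zero_l B_zero_r

lemma nonneg: "B x x \<ge> 0" using pos[of x] by (cases "x = 0") (auto simp: B_zero_l)
lemma B_eq0: "B x x = 0 \<longleftrightarrow> x = 0" using pos[of x] by (cases "x = 0") (auto simp: B_zero_l)

lemma bil: "bilinear B" unfolding bilinear_def using lin_Bl lin_Br by blast

lemma max_eig:
  assumes S: "linear S" and W: "subspace W" and inv: "\<forall>x\<in>W. S x \<in> W"
    and sy: "\<forall>x\<in>W. \<forall>y\<in>W. B (S x) y = B x (S y)" and ne: "\<exists>x\<in>W. x \<noteq> 0"
  shows "\<exists>e\<in>W. e \<noteq> 0 \<and> (\<exists>l. S e = l *\<^sub>R e \<and> (\<forall>w\<in>W. B (S w) w \<le> l * B w w))"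
proof -
  define K where "K = W \<inter> sphere 0 1"
  define R where "R w = B (S w) w / B w w" for w
  have cK: "compact K" unfolding K_def
    using compact_Int_closed[OF compact_sphere closed_subspace[OF W], of 0 1] by (simp add: Int_commute)
  obtain x0 where x0: "x0 \<in> W" "x0 \<noteq> 0" using ne by blast
  have "(1 / norm x0) *\<^sub>R x0 \<in> K" unfolding K_def using x0 W
    by (simp add: subspace_scale)
  hence neK: "K \<noteq> {}" by blast
  have cS: "continuous_on UNIV S" using S by (simp add: linear_continuous_on linear_conv_bounded_linear)
  have c1: "continuous_on K (\<lambda>w. B (S w) w)"
    by (rule bilinear_continuous_on_compose[OF continuous_on_subset[OF cS] continuous_on_id bil]) simp
  have c2: "continuous_on K (\<lambda>w. B w w)"
    by (rule bilinear_continuous_on_compose[OF continuous_on_id continuous_on_id bil])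
  have nz: "\<forall>w\<in>K. B w w \<noteq> 0"
  proof
    fix w assume "w \<in> K"
    hence "w \<noteq> 0" unfolding K_def by auto
    thus "B w w \<noteq> 0" by (simp add: B_eq0)
  qed
  have cR: "continuous_on K R" unfolding R_def
    by (rule continuous_on_divide[OF c1 c2 nz])
  obtain e where eK: "e \<in> K" and emax: "\<forall>y\<in>K. R y \<le> R e"
    using continuous_attains_sup[OF cK neK cR] by blast
  define l where "l = R e"
  have eW: "e \<in> W" and e0: "e \<noteq> 0" using eK unfolding K_def by (auto simp del: B_eq0)
  have Bee: "B e e > 0" using pos[OF e0] .
  have bound: "B (S w) w \<le> l * B w w" if wW: "w \<in> W" for w
  proof (cases "w = 0")
    case True thus ?thesis by (simp add: B_zero_l linear_0[OF S])
  next
    case False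
    define u where "u = (1 / norm w) *\<^sub>R w"
    have uK: "u \<in> K" unfolding K_def u_def using wW False W by (simp add: subspace_scale)
    have "R u = R w" unfolding R_def u_def using False
      by (simp add: B_simps linear_scale[OF S] power2_eq_square field_simps)
    hence "R w \<le> l" using emax uK unfolding l_def by metis
    thus ?thesis unfolding R_def using pos[OF False] by (simp add: divide_le_eq)
  qed
  have Se: "B (S e) e = l * B e e" unfolding l_def R_def using Bee by simp
  define d where "d = S e - l *\<^sub>R e"
  have dW: "d \<in> W" unfolding d_def using inv eW W by (simp add: subspace_diff subspace_scale)
  define c where "c = B d d"
  define K' where "K' = l * B d d - B (S d) d"
  have key: "2 * s * c \<le> s^2 * K'" for s :: real
  proof -
    have "e + s *\<^sub>R d \<in> W" using eW dW W by (simp add: subspace_add subspace_scale)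
    from bound[OF this]
    have "B (S (e + s *\<^sub>R d)) (e + s *\<^sub>R d) \<le> l * B (e + s *\<^sub>R d) (e + s *\<^sub>R d)" .
    moreover have "B (S d) e = B (S e) d" using sy dW eW symm by metis
    moreover have "B d e = B e d" by (rule symm)
    moreover have "B (S e) d - l * B e d = c" unfolding c_def d_def using symm[of e "S e"] by (simp add: B_simps algebra_simps)
    ultimately show ?thesis using Se unfolding K'_def
      by (simp add: B_simps linear_add[OF S] linear_scale[OF S] power2_eq_square algebra_simps)
  qed
  have "c = 0"
  proof (rule ccontr)
    assume "c \<noteq> 0"
    hence cp: "c > 0" unfolding c_def using nonneg[of d] by linarith
    define s where "s = c / (\<bar>K'\<bar> + 1)"
    have sp: "s > 0" unfolding s_def using cp by simp
    have "2 * s * c \<le> s^2 * K'" by (rule key)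
    hence "2 * c \<le> s * K'" using sp by (simp add: power2_eq_square)
    also have "s * K' \<le> s * \<bar>K'\<bar>" using sp by simp
    also have "s * \<bar>K'\<bar> < c" unfolding s_def using cp
      by (simp add: field_simps)
    finally show False using cp by simp
  qed
  hence "d = 0" unfolding c_def using B_eq0 by simp
  hence "S e = l *\<^sub>R e" unfolding d_def by simp
  thus ?thesis using eW e0 bound by blast
qed

end


context ipform begin

lemma subspace_orth:
  assumes "subspace W" shows "subspace {w\<in>W. B w e = 0}"
  using assms unfolding subspace_def by (auto simp: B_simps)

lemma dim_less:
  fixes V W :: "'g set"
  assumes "subspace V" "subspace W" "V \<subseteq> W" "x \<in> W" "x \<notin> V"
  shows "dim V < dim W"
proof -
  have e1: "span V = V" using assms(1) by (simp add: span_eq_iff)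
  have e2: "span W = W" using assms(2) by (simp add: span_eq_iff)
  have "V \<subset> W" using assms(3-5) by auto
  thus ?thesis using dim_psubset[of V W] e1 e2 by simp
qed

lemma span_eig:
  assumes S: "linear S"
  shows "subspace W \<Longrightarrow> \<forall>x\<in>W. S x \<in> W \<Longrightarrow> \<forall>x\<in>W. \<forall>y\<in>W. B (S x) y = B x (S y)
     \<Longrightarrow> W \<subseteq> span {e\<in>W. \<exists>c. S e = c *\<^sub>R e}"
proof (induction "dim W" arbitrary: W rule: less_induct)
  case less
  show ?case
  proof (cases "\<exists>x\<in>W. x \<noteq> 0")
    case False
    thus ?thesis by (auto simp: span_zero)
  next
    case True
    obtain e l where eW: "e \<in> W" and e0: "e \<noteq> 0" and Se: "S e = l *\<^sub>R e"
      using max_eig[OF S less.prems True] by blast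
    define W' where "W' = {w\<in>W. B w e = 0}"
    have sW': "subspace W'" unfolding W'_def by (rule subspace_orth[OF less.prems(1)])
    have iW': "\<forall>x\<in>W'. S x \<in> W'"
    proof
      fix x assume x: "x \<in> W'"
      have "B (S x) e = B x (S e)" using less.prems(3) x eW unfolding W'_def by blast
      also have "\<dots> = 0" using x unfolding W'_def Se by (simp add: B_simps)
      finally show "S x \<in> W'" using x less.prems(2) unfolding W'_def by blast
    qed
    have yW': "\<forall>x\<in>W'. \<forall>y\<in>W'. B (S x) y = B x (S y)" using less.prems(3) unfolding W'_def by blast
    have eW': "e \<notin> W'" unfolding W'_def using pos[OF e0] by simp
    have "dim W' < dim W" by (rule dim_less[OF sW' less.prems(1) _ eW eW']) (auto simp: W'_def)
    from less.hyps[OF this sW' iW' yW']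
    have IH: "W' \<subseteq> span {e\<in>W. \<exists>c. S e = c *\<^sub>R e}"
      by (rule order_trans) (rule span_mono, auto simp: W'_def)
    show ?thesis
    proof
      fix w assume wW: "w \<in> W"
      define a where "a = B w e / B e e"
      have "w - a *\<^sub>R e \<in> W'" unfolding W'_def a_def using wW eW less.prems(1) pos[OF e0]
        by (simp add: B_simps subspace_diff subspace_scale)
      hence 1: "w - a *\<^sub>R e \<in> span {e\<in>W. \<exists>c. S e = c *\<^sub>R e}" using IH by blast
      have "e \<in> span {e\<in>W. \<exists>c. S e = c *\<^sub>R e}" using eW Se by (intro span_base) blast
      hence "a *\<^sub>R e \<in> span {e\<in>W. \<exists>c. S e = c *\<^sub>R e}" by (rule span_scale)
      from span_add[OF 1 this] show "w \<in> span {e\<in>W. \<exists>c. S e = c *\<^sub>R e}" by simp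
    qed
  qed
qed

lemma common_eig:
  "subspace W \<Longrightarrow> \<forall>S\<in>F. linear S \<and> (\<forall>x\<in>W. S x \<in> W) \<and> (\<forall>x\<in>W. \<forall>y\<in>W. B (S x) y = B x (S y))
   \<Longrightarrow> \<forall>S\<in>F. \<forall>T\<in>F. \<forall>x\<in>W. S (T x) = T (S x) \<Longrightarrow> \<exists>x\<in>W. x \<noteq> 0
   \<Longrightarrow> \<exists>x\<in>W. x \<noteq> 0 \<and> (\<forall>S\<in>F. \<exists>c. S x = c *\<^sub>R x)"
proof (induction "dim W" arbitrary: W rule: less_induct)
  case less
  show ?case
  proof (cases "\<forall>S\<in>F. \<exists>c. \<forall>x\<in>W. S x = c *\<^sub>R x")
    case True
    then show ?thesis using less.prems(4) by metis
  next
    case False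
    then obtain S where SF: "S \<in> F" and ns: "\<not> (\<exists>c. \<forall>x\<in>W. S x = c *\<^sub>R x)" by blast
    have S: "linear S" "\<forall>x\<in>W. S x \<in> W" "\<forall>x\<in>W. \<forall>y\<in>W. B (S x) y = B x (S y)"
      using less.prems(2) SF by auto
    obtain e l where eW: "e \<in> W" and e0: "e \<noteq> 0" and Se: "S e = l *\<^sub>R e"
      using max_eig[OF S(1) less.prems(1) S(2) S(3) less.prems(4)] by blast
    define V where "V = {x\<in>W. S x = l *\<^sub>R x}"
    have sV: "subspace V" using less.prems(1) unfolding V_def subspace_def
      by (auto simp: linear_add[OF S(1)] linear_scale[OF S(1)] linear_0[OF S(1)] scaleR_add_right)
    obtain x where xW: "x \<in> W" and xV: "x \<notin> V" using ns unfolding V_def by blast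
    have dV: "dim V < dim W" by (rule dim_less[OF sV less.prems(1) _ xW xV]) (auto simp: V_def)
    have p2: "\<forall>T\<in>F. linear T \<and> (\<forall>x\<in>V. T x \<in> V) \<and> (\<forall>x\<in>V. \<forall>y\<in>V. B (T x) y = B x (T y))"
    proof
      fix T assume TF: "T \<in> F"
      have T: "linear T" "\<forall>x\<in>W. T x \<in> W" "\<forall>x\<in>W. \<forall>y\<in>W. B (T x) y = B x (T y)"
        using less.prems(2) TF by auto
      have "T x \<in> V" if "x \<in> V" for x
      proof -
        have "S (T x) = T (S x)" using less.prems(3) SF TF that unfolding V_def by blast
        also have "\<dots> = l *\<^sub>R T x" using that unfolding V_def by (simp add: linear_scale[OF T(1)])
        finally show ?thesis using T(2) that unfolding V_def by blast
      qed
      thus "linear T \<and> (\<forall>x\<in>V. T x \<in> V) \<and> (\<forall>x\<in>V. \<forall>y\<in>V. B (T x) y = B x (T y))"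
        using T unfolding V_def by blast
    qed
    have p3: "\<forall>S\<in>F. \<forall>T\<in>F. \<forall>x\<in>V. S (T x) = T (S x)" using less.prems(3) unfolding V_def by blast
    have p4: "\<exists>x\<in>V. x \<noteq> 0" using eW e0 Se unfolding V_def by blast
    from less.hyps[OF dV sV p2 p3 p4] show ?thesis unfolding V_def by blast
  qed
qed

end


context lieB begin

lemma lin_pow: "linear ((br Y) ^^ n)"
proof (induction n)
  case 0 show ?case by (simp add: linear_id id_def[symmetric])
next
  case (Suc n) show ?case unfolding funpow.simps(2) by (rule linear_compose[OF Suc lin_r])
qed

lemma pow_bound:
  obtains Cb where "Cb > 0" "\<And>n X. norm (((br Y) ^^ n) X) \<le> Cb ^ n * norm X"
proof -
  obtain Cb where Cb: "Cb > 0" "\<And>x. norm (br Y x) \<le> Cb * norm x"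
    using linear_bounded_pos[OF lin_r[of Y]] by blast
  have "norm (((br Y) ^^ n) X) \<le> Cb ^ n * norm X" for n X
  proof (induction n)
    case 0 thus ?case by simp
  next
    case (Suc n)
    have "norm (((br Y) ^^ Suc n) X) \<le> Cb * norm (((br Y) ^^ n) X)" using Cb(2) by simp
    also have "\<dots> \<le> Cb * (Cb ^ n * norm X)" using Suc Cb(1) by (simp add: mult_left_mono)
    finally show ?case by (simp add: mult.assoc)
  qed
  thus ?thesis using that Cb(1) by blast
qed

lemma exp_summable: "summable (\<lambda>n. ((br Y) ^^ n) X /\<^sub>R fact n)"
proof -
  obtain Cb where Cb: "Cb > 0" "\<And>n X. norm (((br Y) ^^ n) X) \<le> Cb ^ n * norm X"
    using pow_bound by blast
  have s: "summable (\<lambda>n. norm X * (inverse (fact n) * Cb ^ n))"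
    by (rule summable_mult[OF summable_exp])
  show ?thesis
  proof (rule summable_comparison_test'[OF s])
    fix n :: nat
    have "norm (((br Y) ^^ n) X /\<^sub>R fact n) = inverse (fact n) * norm (((br Y) ^^ n) X)" by simp
    also have "\<dots> \<le> inverse (fact n) * (Cb ^ n * norm X)" using Cb(2) by (simp add: mult_left_mono)
    also have "\<dots> = norm X * (inverse (fact n) * Cb ^ n)" by (simp add: algebra_simps)
    finally show "norm (((br Y) ^^ n) X /\<^sub>R fact n) \<le> norm X * (inverse (fact n) * Cb ^ n)" .
  qed
qed

lemma exp_sums: "(\<lambda>n. ((br Y) ^^ n) X /\<^sub>R fact n) sums exp_ad br Y X"
  unfolding exp_ad_def using exp_summable by (rule summable_sums)

lemma exp_linear: "linear (exp_ad br Y)"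
proof (rule linearI)
  fix a b
  have "(\<lambda>n. ((br Y) ^^ n) a /\<^sub>R fact n + ((br Y) ^^ n) b /\<^sub>R fact n) sums (exp_ad br Y a + exp_ad br Y b)"
    by (rule sums_add[OF exp_sums exp_sums])
  moreover have "(\<lambda>n. ((br Y) ^^ n) a /\<^sub>R fact n + ((br Y) ^^ n) b /\<^sub>R fact n)
      = (\<lambda>n. ((br Y) ^^ n) (a + b) /\<^sub>R fact n)"
    by (simp add: linear_add[OF lin_pow] scaleR_add_right)
  ultimately show "exp_ad br Y (a + b) = exp_ad br Y a + exp_ad br Y b"
    using sums_unique2[OF exp_sums] by metis
next
  fix c :: real and a
  have "(\<lambda>n. c *\<^sub>R (((br Y) ^^ n) a /\<^sub>R fact n)) sums (c *\<^sub>R exp_ad br Y a)"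
    by (rule sums_scaleR_right[OF exp_sums])
  moreover have "(\<lambda>n. c *\<^sub>R (((br Y) ^^ n) a /\<^sub>R fact n)) = (\<lambda>n. ((br Y) ^^ n) (c *\<^sub>R a) /\<^sub>R fact n)"
    by (simp add: linear_scale[OF lin_pow] mult.commute)
  ultimately show "exp_ad br Y (c *\<^sub>R a) = c *\<^sub>R exp_ad br Y a"
    using sums_unique2[OF exp_sums] by metis
qed

lemma exp_comm:
  assumes L: "linear L" and h: "\<And>x. L (br Y x) = br Y2 (L x)"
  shows "L (exp_ad br Y X) = exp_ad br Y2 (L X)"
proof -
  have p: "L (((br Y) ^^ n) X) = ((br Y2) ^^ n) (L X)" for n
    by (induction n) (simp_all add: h)
  have bl: "bounded_linear L" using L by (simp add: linear_conv_bounded_linear)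
  have "(\<lambda>n. L (((br Y) ^^ n) X /\<^sub>R fact n)) sums L (exp_ad br Y X)"
    by (rule bounded_linear.sums[OF bl exp_sums])
  moreover have "(\<lambda>n. L (((br Y) ^^ n) X /\<^sub>R fact n)) = (\<lambda>n. ((br Y2) ^^ n) (L X) /\<^sub>R fact n)"
    using p by (simp add: linear_scale[OF L])
  ultimately show ?thesis using sums_unique2[OF exp_sums] by metis
qed

lemma exp_triv:
  assumes "br Y X = 0" shows "exp_ad br Y X = X"
proof -
  have "(\<lambda>n. ((br Y) ^^ n) X /\<^sub>R fact n) = (\<lambda>n. if n = 0 then X /\<^sub>R fact n else 0)"
  proof
    fix n show "((br Y) ^^ n) X /\<^sub>R fact n = (if n = 0 then X /\<^sub>R fact n else 0)"
    proof (cases n)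
      case 0 thus ?thesis by simp
    next
      case (Suc k)
      have "((br Y) ^^ Suc k) X = ((br Y) ^^ k) (br Y X)" by (simp only: funpow_Suc_right o_def)
      also have "\<dots> = 0" using assms linear_0[OF lin_pow] by simp
      finally show ?thesis using Suc by simp
    qed
  qed
  hence "(\<lambda>n. ((br Y) ^^ n) X /\<^sub>R fact n) sums (X /\<^sub>R fact 0)" using sums_single[of 0 "\<lambda>n. X /\<^sub>R fact n"]
    by simp
  thus ?thesis using sums_unique2[OF exp_sums] by simp
qed


lemma exp_eig:
  assumes w: "br Y e = w" and w2: "br Y w = - (\<mu>^2) *\<^sub>R e" and mu: "\<mu> \<noteq> 0"
  shows "exp_ad br Y e = cos \<mu> *\<^sub>R e + (sin \<mu> / \<mu>) *\<^sub>R w"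
proof -
  define P where "P k = (-1) ^ k * \<mu> ^ (2 * k)" for k :: nat
  have P: "P (Suc k) = - (\<mu>^2) * P k" for k unfolding P_def by (simp add: power2_eq_square)
  have p: "((br Y) ^^ n) e = (if even n then P (n div 2) *\<^sub>R e else P (n div 2) *\<^sub>R w)" for n
  proof (induction n)
    case 0 thus ?case by (simp add: P_def)
  next
    case (Suc n)
    show ?case
    proof (cases "even n")
      case True
      have "((br Y) ^^ Suc n) e = br Y (((br Y) ^^ n) e)" by simp
      also have "\<dots> = P (n div 2) *\<^sub>R w" using Suc True by (simp add: scale_r w)
      finally show ?thesis using True by simp
    next
      case False
      hence "Suc n div 2 = Suc (n div 2)" by presburger
      note d = this
      have "((br Y) ^^ Suc n) e = br Y (((br Y) ^^ n) e)" by simp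
      also have "\<dots> = P (n div 2) *\<^sub>R br Y w" using Suc False by (simp add: scale_r)
      also have "\<dots> = P (Suc (n div 2)) *\<^sub>R e" unfolding w2 P by simp
      finally show ?thesis using False d by simp
    qed
  qed
  have t: "((br Y) ^^ n) e /\<^sub>R fact n = (cos_coeff n * \<mu> ^ n) *\<^sub>R e + (sin_coeff n * \<mu> ^ n / \<mu>) *\<^sub>R w" for n
  proof (cases "even n")
    case True
    then obtain j where n: "n = 2 * j" by blast
    have j: "n div 2 = j" using n by simp
    have cc: "cos_coeff n = (-1) ^ j / fact n" using True j by (simp add: cos_coeff_def)
    have sc: "sin_coeff n = 0" using True by (simp add: sin_coeff_def)
    have "((br Y) ^^ n) e = P j *\<^sub>R e" using p[of n] True j by simp
    hence "((br Y) ^^ n) e /\<^sub>R fact n = (inverse (fact n) * P j) *\<^sub>R e" by simp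
    also have "inverse (fact n) * P j = cos_coeff n * \<mu> ^ n" unfolding cc P_def using n by (simp add: field_simps)
    finally show ?thesis unfolding sc by simp
  next
    case False
    then obtain j where n: "n = 2 * j + 1" using oddE by blast
    have j: "n div 2 = j" "(n - Suc 0) div 2 = j" using n by simp_all
    have b: "\<mu> ^ n / \<mu> = \<mu> ^ (2 * j)" using n mu by simp
    have sc1: "sin_coeff n = (-1) ^ j / fact n" using False j by (simp add: sin_coeff_def)
    have cc: "cos_coeff n = 0" using False by (simp add: cos_coeff_def)
    have "((br Y) ^^ n) e = P j *\<^sub>R w" using p[of n] False j by simp
    hence "((br Y) ^^ n) e /\<^sub>R fact n = (inverse (fact n) * P j) *\<^sub>R w" by simp
    also have "inverse (fact n) * P j = sin_coeff n * \<mu> ^ n / \<mu>"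
      unfolding sc1 P_def times_divide_eq_right[symmetric] b by (simp add: field_simps)
    finally show ?thesis unfolding cc by simp
  qed
  have "(\<lambda>n. (cos_coeff n * \<mu> ^ n) *\<^sub>R e + (sin_coeff n * \<mu> ^ n / \<mu>) *\<^sub>R w) sums (cos \<mu> *\<^sub>R e + (sin \<mu> / \<mu>) *\<^sub>R w)"
  proof (rule sums_add)
    show "(\<lambda>n. (cos_coeff n * \<mu> ^ n) *\<^sub>R e) sums (cos \<mu> *\<^sub>R e)"
      using sums_scaleR_left[OF cos_converges[of \<mu>], of e] by simp
    have "(\<lambda>n. sin_coeff n * \<mu> ^ n / \<mu>) sums (sin \<mu> / \<mu>)"
      using sums_divide[OF sin_converges[of \<mu>], of \<mu>] by simp
    thus "(\<lambda>n. (sin_coeff n * \<mu> ^ n / \<mu>) *\<^sub>R w) sums ((sin \<mu> / \<mu>) *\<^sub>R w)"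
      by (rule sums_scaleR_left)
  qed
  hence "(\<lambda>n. ((br Y) ^^ n) e /\<^sub>R fact n) sums (cos \<mu> *\<^sub>R e + (sin \<mu> / \<mu>) *\<^sub>R w)"
    by (simp only: t)
  from sums_unique2[OF exp_sums this] show ?thesis .
qed


end


locale mainL = lieB br for br :: "'g::euclidean_space \<Rightarrow> 'g \<Rightarrow> 'g" +
  fixes \<sigma> \<theta> :: "'g \<Rightarrow> 'g" and t :: "'g set" and Y :: 'g
  assumes sig: "lie_involution br \<sigma>" and cart: "cartan_involution br \<theta>"
    and comm: "\<sigma> \<circ> \<theta> = \<theta> \<circ> \<sigma>"
    and noncpt: "\<not> lie_compact br"
    and irred: "\<forall>I. lie_ideal br I \<and> \<sigma> ` I \<subseteq> I \<longrightarrow> I = {0} \<or> I = UNIV"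
    and tmax: "max_abelian br t (eig1 \<theta> \<inter> eigm1 \<sigma>)"
    and Yt: "Y \<in> t_plus br t (eigm1 \<theta>)"
begin

lemma th_aut: "lie_aut br \<theta>" using cart unfolding cartan_involution_def lie_involution_def by blast
lemma th_lin: "linear \<theta>" using th_aut unfolding lie_aut_def by blast
lemma th_br: "\<theta> (br x y) = br (\<theta> x) (\<theta> y)" using th_aut unfolding lie_aut_def by blast
lemma th_th: "\<theta> (\<theta> x) = x" using cart unfolding cartan_involution_def lie_involution_def by blast
lemma th_pos: "x \<noteq> 0 \<Longrightarrow> - killing br x (\<theta> x) > 0"
  using cart unfolding cartan_involution_def by blast
lemma si_aut: "lie_aut br \<sigma>" using sig unfolding lie_involution_def by blast
lemma si_lin: "linear \<sigma>" using si_aut unfolding lie_aut_def by blast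
lemma si_br: "\<sigma> (br x y) = br (\<sigma> x) (\<sigma> y)" using si_aut unfolding lie_aut_def by blast
lemma si_si: "\<sigma> (\<sigma> x) = x" using sig unfolding lie_involution_def by blast
lemma si_th: "\<sigma> (\<theta> x) = \<theta> (\<sigma> x)" using comm by (metis comp_apply)

lemma th_add: "\<theta> (a + b) = \<theta> a + \<theta> b" by (rule linear_add[OF th_lin])
lemma th_diff: "\<theta> (a - b) = \<theta> a - \<theta> b" by (rule linear_diff[OF th_lin])
lemma th_scale: "\<theta> (c *\<^sub>R a) = c *\<^sub>R \<theta> a" by (rule linear_scale[OF th_lin])
lemma th_neg: "\<theta> (- a) = - \<theta> a" by (rule linear_neg[OF th_lin])
lemma th_0: "\<theta> 0 = 0" by (rule linear_0[OF th_lin])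
lemma si_add: "\<sigma> (a + b) = \<sigma> a + \<sigma> b" by (rule linear_add[OF si_lin])
lemma si_diff: "\<sigma> (a - b) = \<sigma> a - \<sigma> b" by (rule linear_diff[OF si_lin])
lemma si_scale: "\<sigma> (c *\<^sub>R a) = c *\<^sub>R \<sigma> a" by (rule linear_scale[OF si_lin])
lemma si_neg: "\<sigma> (- a) = - \<sigma> a" by (rule linear_neg[OF si_lin])
lemma si_0: "\<sigma> 0 = 0" by (rule linear_0[OF si_lin])
lemmas th_simps = th_add th_diff th_scale th_neg th_0 th_th
lemmas si_simps = si_add si_diff si_scale si_neg si_0 si_si

lemma t_sub: "t \<subseteq> eig1 \<theta> \<inter> eigm1 \<sigma>" using tmax unfolding max_abelian_def by blast
lemma t_ab: "x \<in> t \<Longrightarrow> y \<in> t \<Longrightarrow> br x y = 0" using tmax unfolding max_abelian_def by blast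
lemma t_th: "Z \<in> t \<Longrightarrow> \<theta> Z = Z" using t_sub unfolding eig1_def by blast
lemma Yt': "Y \<in> t" using Yt unfolding t_plus_def by blast
lemma thY: "\<theta> Y = Y" using t_th Yt' by blast
lemma siY: "\<sigma> Y = - Y" using t_sub Yt' unfolding eigm1_def by blast

definition Bt :: "'g \<Rightarrow> 'g \<Rightarrow> real" where "Bt X Z = - killing br X (\<theta> Z)"

lemma Bt_sym: "Bt X Z = Bt Z X"
proof -
  have "killing br X (\<theta> Z) = killing br (\<theta> X) (\<theta> (\<theta> Z))" by (rule killing_aut[OF th_aut, symmetric])
  also have "\<dots> = killing br Z (\<theta> X)" by (simp add: th_th killing_sym)
  finally show ?thesis unfolding Bt_def by simp
qed

lemma Bt_l: "linear (\<lambda>x. Bt x y)" unfolding Bt_def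
  by (rule linearI) (simp_all add: killing_add_l killing_scale_l)
lemma Bt_r: "linear (Bt x)" unfolding Bt_def
  by (rule linearI) (simp_all add: th_simps killing_add_r killing_scale_r)
lemma Bt_pos: "x \<noteq> 0 \<Longrightarrow> Bt x x > 0" unfolding Bt_def by (rule th_pos)

lemma ip: "ipform Bt"
  using Bt_l Bt_r Bt_sym Bt_pos by (intro ipform.intro) auto

end

sublocale mainL \<subseteq> ip: ipform Bt by (rule ip)

context mainL begin

lemma Bt_skew: "\<theta> Z = Z \<Longrightarrow> Bt (br Z X) W = - Bt X (br Z W)"
  unfolding Bt_def using killing_skew[of Z X "\<theta> W"] by (simp add: th_br)

abbreviation D where "D \<equiv> br Y"
abbreviation F where "F \<equiv> exp_ad br (- Y)"
abbreviation Ad where "Ad \<equiv> exp_ad br Y"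

lemma D_skew: "Bt (D X) W = - Bt X (D W)" by (rule Bt_skew[OF thY])
lemma D2_sym: "Bt (- D (D X)) W = Bt X (- D (D W))"
  using D_skew by (simp add: ip.B_simps neg_r)
lemma D2_norm: "Bt (- D (D X)) X = Bt (D X) (D X)"
  using D_skew by (simp add: ip.B_simps neg_r)
lemma De_orth: "Bt (D X) X = 0"
  using D_skew[of X X] Bt_sym[of "D X" X] by simp

lemma th_D: "\<theta> (D x) = D (\<theta> x)" by (simp add: th_br thY)
lemma F_th: "\<theta> (F x) = F (\<theta> x)"
  by (rule exp_comm[OF th_lin]) (simp add: th_br thY th_simps)
lemma Ad_th: "\<theta> (Ad x) = Ad (\<theta> x)"
  by (rule exp_comm[OF th_lin]) (simp add: th_br thY th_simps)
lemma F_si: "\<sigma> (F x) = Ad (\<sigma> x)"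
  by (rule exp_comm[OF si_lin]) (simp add: si_br siY si_simps neg_l)
lemma Ad_si: "\<sigma> (Ad x) = F (\<sigma> x)"
  by (rule exp_comm[OF si_lin]) (simp add: si_br siY si_simps)
lemma F_D: "D (F x) = F (D x)"
  by (rule exp_comm[OF lin_r]) (simp add: neg_l neg_r)
lemma F_lin: "linear F" by (rule exp_linear)
lemma F_add: "F (a + b) = F a + F b" by (rule linear_add[OF F_lin])
lemma F_diff: "F (a - b) = F a - F b" by (rule linear_diff[OF F_lin])
lemma F_scale: "F (c *\<^sub>R a) = c *\<^sub>R F a" by (rule linear_scale[OF F_lin])
lemma F_neg: "F (- a) = - F a" by (rule linear_neg[OF F_lin])
lemma F_0: "F 0 = 0" by (rule linear_0[OF F_lin])
lemmas F_simps = F_add F_diff F_scale F_neg F_0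
lemma Ad_lin: "linear Ad" by (rule exp_linear)

end


context mainL begin

lemma D_m: "\<theta> x = - x \<Longrightarrow> \<theta> (D x) = - D x" by (simp add: th_D neg_r)
lemma D_k: "\<theta> x = x \<Longrightarrow> \<theta> (D x) = D x" by (simp add: th_D)
lemma ZY_comm: "Z \<in> t \<Longrightarrow> D (br Z x) = br Z (D x)"
  using deriv[of Y Z x] t_ab[OF Yt'] by (simp add: zero_l)
lemma ZZ_comm: "Z \<in> t \<Longrightarrow> Z' \<in> t \<Longrightarrow> br Z (br Z' x) = br Z' (br Z x)"
  using deriv[of Z Z' x] t_ab by (simp add: zero_l)

lemma rootbound:
  assumes xm: "\<theta> x = - x" and x0: "x \<noteq> 0" and ev: "- D (D x) = c *\<^sub>R x"
  shows "c < (pi / 2)^2"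
proof (cases "c > 0")
  case False
  have "(pi / 2)^2 > 0" by simp
  thus ?thesis using False by linarith
next
  case True
  define \<nu> where "\<nu> = sqrt c"
  have nu: "\<nu> > 0" "\<nu>^2 = c" unfolding \<nu>_def using True by simp_all
  define W0 where "W0 = {w. \<theta> w = - w \<and> D (D w) = - c *\<^sub>R w}"
  define J where "J w = (1 / \<nu>) *\<^sub>R D w" for w
  have Jlin: "linear J" unfolding J_def
    by (rule linearI) (simp_all add: add_r scale_r scaleR_add_right)
  have sW0: "subspace W0" unfolding W0_def subspace_def
    by (auto simp: th_simps add_r scale_r zero_r scaleR_add_right)
  have xW0: "x \<in> W0" unfolding W0_def using xm ev by (simp add: minus_equation_iff[of "D (D x)"])
  have JW0: "J w \<in> W0" if "w \<in> W0" for w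
    using that unfolding W0_def J_def by (auto simp: th_simps br_simps D_m)
  have JJ: "J (J w) = - w" if "w \<in> W0" for w
    using that nu unfolding W0_def J_def by (auto simp: br_simps power2_eq_square)
  have ZW0: "br Z w \<in> W0" if "w \<in> W0" "Z \<in> t" for w Z
    using that unfolding W0_def by (auto simp: th_br t_th ZY_comm br_simps)
  have JZ: "J (br Z w) = br Z (J w)" if "Z \<in> t" for Z w
    unfolding J_def using that by (simp add: ZY_comm br_simps)
  define Fam where "Fam = (\<lambda>Z. \<lambda>w. br Z (J w)) ` t"
  have p2: "\<forall>S\<in>Fam. linear S \<and> (\<forall>x\<in>W0. S x \<in> W0) \<and> (\<forall>x\<in>W0. \<forall>y\<in>W0. Bt (S x) y = Bt x (S y))"
  proof
    fix S assume "S \<in> Fam"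
    then obtain Z where Z: "Z \<in> t" and S: "S = (\<lambda>w. br Z (J w))" unfolding Fam_def by blast
    have "linear S" unfolding S using linear_compose[OF Jlin lin_r[of Z]] by (simp add: o_def)
    moreover have "\<forall>x\<in>W0. S x \<in> W0" unfolding S using ZW0 JW0 Z by blast
    moreover have "Bt (S u) v = Bt u (S v)" for u v
    proof -
      have "Bt (S u) v = - Bt (J u) (br Z v)" unfolding S by (rule Bt_skew[OF t_th[OF Z]])
      also have "\<dots> = Bt u (J (br Z v))" unfolding J_def using D_skew
        by (simp add: ip.B_simps)
      also have "\<dots> = Bt u (S v)" unfolding S using JZ[OF Z] by simp
      finally show ?thesis .
    qed
    ultimately show "linear S \<and> (\<forall>x\<in>W0. S x \<in> W0) \<and> (\<forall>x\<in>W0. \<forall>y\<in>W0. Bt (S x) y = Bt x (S y))"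
      by blast
  qed
  have p3: "\<forall>S\<in>Fam. \<forall>T\<in>Fam. \<forall>x\<in>W0. S (T x) = T (S x)"
    unfolding Fam_def using JZ ZZ_comm by auto
  have p4: "\<exists>x\<in>W0. x \<noteq> 0" using xW0 x0 by blast
  obtain v where vW0: "v \<in> W0" and v0: "v \<noteq> 0" and vc: "\<forall>S\<in>Fam. \<exists>c. S v = c *\<^sub>R v"
    using ip.common_eig[OF sW0 p2 p3 p4] by blast
  define \<beta> where "\<beta> Z = (SOME c. br Z (J v) = c *\<^sub>R v)" for Z
  have hb: "br Z (J v) = \<beta> Z *\<^sub>R v" if "Z \<in> t" for Z
  proof -
    have "(\<lambda>w. br Z (J w)) \<in> Fam" unfolding Fam_def using that by blast
    hence "\<exists>c. br Z (J v) = c *\<^sub>R v" using vc by fastforce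
    thus ?thesis unfolding \<beta>_def by (rule someI_ex)
  qed
  have vm: "v \<in> eigm1 \<theta>" "J v \<in> eigm1 \<theta>" using vW0 JW0[OF vW0] unfolding W0_def eigm1_def by auto
  have r1: "br Z v = - (\<beta> Z *\<^sub>R J v)" if "Z \<in> t" for Z
  proof -
    have "J (br Z (J v)) = \<beta> Z *\<^sub>R J v" using hb[OF that] linear_scale[OF Jlin] by simp
    moreover have "J (br Z (J v)) = - br Z v" using JZ[OF that] JJ[OF vW0] by (simp add: neg_r)
    ultimately show ?thesis by (metis minus_minus)
  qed
  have yb: "\<beta> Y = - \<nu>"
  proof -
    have cnu: "c / \<nu> = \<nu>" using nu by (auto simp: power2_eq_square)
    have "br Y (J v) = - \<nu> *\<^sub>R v" using vW0 cnu unfolding J_def W0_def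
      by (simp add: br_simps)
    hence "(\<beta> Y - (- \<nu>)) *\<^sub>R v = 0" using hb[OF Yt'] by (simp add: algebra_simps)
    thus ?thesis using v0 by simp
  qed
  have "m_root br t (eigm1 \<theta>) \<beta>"
    unfolding m_root_def
  proof (intro conjI)
    show "\<exists>X1\<in>eigm1 \<theta>. \<exists>X2\<in>eigm1 \<theta>. (X1 \<noteq> 0 \<or> X2 \<noteq> 0) \<and>
        (\<forall>Z\<in>t. br Z X1 = - (\<beta> Z *\<^sub>R X2) \<and> br Z X2 = \<beta> Z *\<^sub>R X1)"
      using vm v0 r1 hb by blast
    show "\<exists>Z\<in>t. \<beta> Z \<noteq> 0" using yb nu Yt' by force
  qed
  hence "\<bar>\<beta> Y\<bar> < pi / 2" using Yt unfolding t_plus_def by blast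
  hence "\<nu> < pi / 2" using yb nu by simp
  hence "\<nu>^2 < (pi / 2)^2" using nu by (intro power_strict_mono) auto
  thus ?thesis using nu by simp
qed

end


lemma lc_add: "(a *\<^sub>R x + b *\<^sub>R y) + (c *\<^sub>R x + d *\<^sub>R y) = (a + c) *\<^sub>R x + (b + d) *\<^sub>R (y::'a::real_vector)"
  by (simp add: algebra_simps)
lemma lc_scale: "r *\<^sub>R (a *\<^sub>R x + b *\<^sub>R y) = (r * a) *\<^sub>R x + (r * b) *\<^sub>R (y::'a::real_vector)"
  by (simp add: algebra_simps)
lemma lc_eq: "a = a' \<Longrightarrow> b = b' \<Longrightarrow> a *\<^sub>R x + b *\<^sub>R y = a' *\<^sub>R x + b' *\<^sub>R (y::'a::real_vector)"
  by simp

context mainL begin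

lemma sub_m: "subspace {w. \<theta> w = - w}"
  unfolding subspace_def by (auto simp: th_simps)
lemma sub_k: "subspace {w. \<theta> w = w}"
  unfolding subspace_def by (auto simp: th_simps)

definition S2 where "S2 x = - D (D x)"
lemma S2_lin: "linear S2" unfolding S2_def
  by (rule linearI) (simp_all add: add_r scale_r)
lemma S2_sym: "Bt (S2 x) y = Bt x (S2 y)" unfolding S2_def by (rule D2_sym)
lemma S2_norm: "Bt (S2 x) x = Bt (D x) (D x)" unfolding S2_def by (rule D2_norm)
lemma S2_m: "\<theta> x = - x \<Longrightarrow> \<theta> (S2 x) = - S2 x" unfolding S2_def by (simp add: th_simps D_m)
lemma S2_k: "\<theta> x = x \<Longrightarrow> \<theta> (S2 x) = S2 x" unfolding S2_def by (simp add: th_simps D_k)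
lemma S2_F: "F (S2 x) = S2 (F x)" unfolding S2_def by (simp add: F_D F_simps)

lemma Mbound_ex: "\<exists>\<kappa>. \<kappa> < (pi/2)^2 \<and> (\<forall>w. \<theta> w = - w \<longrightarrow> Bt (D w) (D w) \<le> \<kappa> * Bt w w)"
proof (cases "\<exists>x\<in>{w. \<theta> w = - w}. x \<noteq> 0")
  case True
  obtain e l where e: "e \<in> {w. \<theta> w = - w}" "e \<noteq> 0" "S2 e = l *\<^sub>R e"
    and bd: "\<forall>w\<in>{w. \<theta> w = - w}. Bt (S2 w) w \<le> l * Bt w w"
    using ip.max_eig[OF S2_lin sub_m _ _ True] S2_m S2_sym by blast
  have "l < (pi/2)^2" using rootbound[of e l] e unfolding S2_def by simp
  thus ?thesis using bd S2_norm by auto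
next
  case False
  thus ?thesis by (intro exI[of _ 0]) (auto simp: zero_r ip.B_simps)
qed

definition kap where "kap = (SOME \<kappa>. \<kappa> < (pi/2)^2 \<and> (\<forall>w. \<theta> w = - w \<longrightarrow> Bt (D w) (D w) \<le> \<kappa> * Bt w w))"
lemma kap: "kap < (pi/2)^2" "\<theta> w = - w \<Longrightarrow> Bt (D w) (D w) \<le> kap * Bt w w"
  using someI_ex[OF Mbound_ex] unfolding kap_def[symmetric] by blast+

lemma Ecos:
  assumes ev: "D (D e) = - (\<mu>^2) *\<^sub>R e" and mu: "\<mu> \<noteq> 0"
  shows "Bt (F (F e)) e = cos (2 * \<mu>) * Bt e e"
proof -
  have Fe: "F e = cos \<mu> *\<^sub>R e + (sin \<mu> / \<mu>) *\<^sub>R (- D e)"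
    by (rule exp_eig[OF _ _ mu]) (simp_all add: neg_l neg_r ev)
  have FDe: "F (D e) = cos \<mu> *\<^sub>R D e + (sin \<mu> / \<mu>) *\<^sub>R ((\<mu>^2) *\<^sub>R e)"
    by (rule exp_eig[OF _ _ mu]) (simp_all add: neg_l neg_r ev scale_r)
  have o: "Bt (D e) e = 0" by (rule De_orth)
  have 1: "Bt (F e) e = cos \<mu> * Bt e e" unfolding Fe using o by (simp add: ip.B_simps)
  have 2: "Bt (F (D e)) e = (sin \<mu> / \<mu>) * \<mu>^2 * Bt e e" unfolding FDe using o by (simp add: ip.B_simps)
  have "F (F e) = cos \<mu> *\<^sub>R F e - (sin \<mu> / \<mu>) *\<^sub>R F (D e)"
    by (subst Fe) (simp add: F_simps)
  hence "Bt (F (F e)) e = cos \<mu> * (cos \<mu> * Bt e e) - (sin \<mu> / \<mu>) * ((sin \<mu> / \<mu>) * \<mu>^2 * Bt e e)"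
    using 1 2 by (simp add: ip.B_simps)
  also have "\<dots> = ((cos \<mu>)^2 - (sin \<mu>)^2) * Bt e e" using mu by (simp add: field_simps power2_eq_square)
  also have "\<dots> = cos (2 * \<mu>) * Bt e e" by (simp add: cos_double)
  finally show ?thesis .
qed

end


context mainL begin

lemma De0: "Bt (D e) (D e) = 0 \<Longrightarrow> F e = e"
  by (rule exp_triv) (simp add: ip.B_eq0 neg_l)

lemma part_a:
  assumes xm: "\<theta> x = - x" and ex: "F (F x) = - x"
  shows "x = 0"
proof (rule ccontr)
  assume x0: "x \<noteq> 0"
  define U where "U = {w. \<theta> w = - w \<and> F (F w) = - w}"
  have sU: "subspace U" unfolding U_def subspace_def by (auto simp: th_simps F_simps)
  have iU: "\<forall>w\<in>U. S2 w \<in> U" unfolding U_def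
    by (auto simp: S2_m S2_F linear_neg[OF S2_lin])
  have ne: "\<exists>w\<in>U. w \<noteq> 0" using x0 xm ex unfolding U_def by blast
  obtain e l where eU: "e \<in> U" and e0: "e \<noteq> 0" and Se: "S2 e = l *\<^sub>R e"
    using ip.max_eig[OF S2_lin sU iU _ ne] S2_sym by blast
  have em: "\<theta> e = - e" and Ee: "F (F e) = - e" using eU unfolding U_def by auto
  have pe: "Bt e e > 0" using ip.pos[OF e0] .
  have le: "l * Bt e e = Bt (D e) (D e)" using S2_norm[of e] Se by (simp add: ip.B_simps)
  have l0: "l \<ge> 0"
  proof (rule ccontr)
    assume "\<not> l \<ge> 0"
    hence "l * Bt e e < 0" using pe by (simp add: mult_neg_pos)
    thus False using le ip.nonneg[of "D e"] by simp
  qed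
  have "l * Bt e e \<le> kap * Bt e e" using le kap(2)[OF em] by simp
  hence lk: "l \<le> kap" using pe by (simp add: mult_le_cancel_right)
  show False
  proof (cases "l = 0")
    case True
    hence "F e = e" using le by (intro De0) simp
    hence "e = - e" using Ee by simp
    hence "e + e = 0" by (metis add.right_inverse)
    hence "(2::real) *\<^sub>R e = 0" by (simp add: scaleR_2)
    thus False using e0 by simp
  next
    case False
    define \<mu> where "\<mu> = sqrt l"
    have mu: "\<mu> > 0" "\<mu>^2 = l" unfolding \<mu>_def using l0 False by simp_all
    have ev: "D (D e) = - (\<mu>^2) *\<^sub>R e" using Se mu unfolding S2_def by (simp add: minus_equation_iff)
    have "Bt (F (F e)) e = cos (2 * \<mu>) * Bt e e" by (rule Ecos[OF ev]) (use mu in simp)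
    hence "- Bt e e = cos (2 * \<mu>) * Bt e e" using Ee by (simp add: ip.B_simps)
    hence "(cos (2 * \<mu>) + 1) * Bt e e = 0" by (simp add: algebra_simps)
    hence "cos (2 * \<mu>) = -1" using pe by simp
    moreover have "\<mu> < pi / 2"
    proof -
      have "\<mu>^2 < (pi/2)^2" using mu lk kap(1) by simp
      thus ?thesis using power_less_imp_less_base[of \<mu> 2 "pi/2"] pi_gt_zero by simp
    qed
    hence "cos pi < cos (2 * \<mu>)" using mu by (intro cos_monotone_0_pi) auto
    ultimately show False by simp
  qed
qed

lemma inj_m:
  assumes wm: "\<theta> w = - w" and eq: "D (D w) + c *\<^sub>R w = 0" and c: "c > kap"
  shows "w = 0"
proof -
  have "D (D w) = - c *\<^sub>R w" using eq by (simp add: eq_neg_iff_add_eq_0)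
  hence "Bt (S2 w) w = c * Bt w w" unfolding S2_def by (simp add: ip.B_simps)
  hence "c * Bt w w \<le> kap * Bt w w" using S2_norm kap(2)[OF wm] by simp
  hence "(c - kap) * Bt w w \<le> 0" by (simp add: algebra_simps)
  hence "Bt w w \<le> 0" using c by (simp add: mult_le_0_iff)
  hence "Bt w w = 0" using ip.nonneg[of w] by simp
  thus ?thesis using ip.B_eq0 by simp
qed

lemma Plemma:
  assumes vk: "\<theta> v = v" and vev: "D (D v) = - (\<mu>^2) *\<^sub>R v" and mu: "\<mu> \<ge> pi"
    and am: "\<theta> a = - a" and aev: "D (D a) = - (\<nu>^2) *\<^sub>R a" and nu: "\<nu> \<ge> 0" "\<nu>^2 \<le> kap"
  shows "br v a = 0"
proof -
  define u0 where "u0 = br v a"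
  define u1 where "u1 = br (D v) a"
  define u2 where "u2 = br v (D a)"
  define u3 where "u3 = br (D v) (D a)"
  have Dlc: "D (p *\<^sub>R x + q *\<^sub>R y) = p *\<^sub>R D x + q *\<^sub>R D y" for p q x y by (simp add: add_r scale_r)
  have h1: "D u0 = 1 *\<^sub>R u1 + 1 *\<^sub>R u2" unfolding u0_def u1_def u2_def by (simp add: deriv[of Y v a])
  have h2: "D u1 = - (\<mu>^2) *\<^sub>R u0 + 1 *\<^sub>R u3" unfolding u0_def u1_def u3_def
    by (simp add: deriv[of Y "D v" a] vev scale_l neg_l)
  have h3: "D u2 = - (\<nu>^2) *\<^sub>R u0 + 1 *\<^sub>R u3" unfolding u0_def u2_def u3_def
    by (simp add: deriv[of Y v "D a"] aev scale_r neg_r)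
  have h4: "D u3 = - (\<nu>^2) *\<^sub>R u1 + - (\<mu>^2) *\<^sub>R u2" unfolding u1_def u2_def u3_def
    by (simp add: deriv[of Y "D v" "D a"] aev vev scale_r scale_l neg_l neg_r add.commute)
  define z where "z = (- (2 * \<mu> * \<nu>)) *\<^sub>R u0 + 2 *\<^sub>R u3"
  have zeq: "D (D u0) + ((\<mu> - \<nu>)^2) *\<^sub>R u0 = z"
  proof -
    have "D (D u0) + ((\<mu> - \<nu>)^2) *\<^sub>R u0 = (1 *\<^sub>R D u1 + 1 *\<^sub>R D u2) + ((\<mu> - \<nu>)^2 *\<^sub>R u0 + 0 *\<^sub>R u3)"
      unfolding h1 Dlc by simp
    also have "\<dots> = ((1 * - (\<mu>^2) + 1 * - (\<nu>^2)) + (\<mu> - \<nu>)^2) *\<^sub>R u0 + ((1 * 1 + 1 * 1) + 0) *\<^sub>R u3"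
      unfolding h2 h3 lc_scale lc_add by simp
    also have "\<dots> = z" unfolding z_def by (rule lc_eq) (simp_all add: power2_eq_square algebra_simps)
    finally show ?thesis .
  qed
  define p1 where "p1 = - (2 * \<mu> * \<nu>) * 1 + 2 * - (\<nu>^2)"
  define p2 where "p2 = - (2 * \<mu> * \<nu>) * 1 + 2 * - (\<mu>^2)"
  have Dz: "D z = p1 *\<^sub>R u1 + p2 *\<^sub>R u2"
  proof -
    have "D z = (- (2 * \<mu> * \<nu>)) *\<^sub>R D u0 + 2 *\<^sub>R D u3" unfolding z_def Dlc by simp
    also have "\<dots> = p1 *\<^sub>R u1 + p2 *\<^sub>R u2" unfolding h1 h4 lc_scale lc_add p1_def p2_def by simp
    finally show ?thesis .
  qed
  have zz: "D (D z) + ((\<mu> + \<nu>)^2) *\<^sub>R z = 0"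
  proof -
    have "D (D z) + ((\<mu> + \<nu>)^2) *\<^sub>R z = (p1 *\<^sub>R D u1 + p2 *\<^sub>R D u2) + ((\<mu> + \<nu>)^2) *\<^sub>R z"
      unfolding Dz Dlc by simp
    also have "\<dots> = ((p1 * - (\<mu>^2) + p2 * - (\<nu>^2)) + (\<mu> + \<nu>)^2 * - (2 * \<mu> * \<nu>)) *\<^sub>R u0
        + ((p1 * 1 + p2 * 1) + (\<mu> + \<nu>)^2 * 2) *\<^sub>R u3"
      unfolding h2 h3 z_def lc_scale lc_add by simp
    also have "\<dots> = 0 *\<^sub>R u0 + 0 *\<^sub>R u3" unfolding p1_def p2_def
      by (rule lc_eq) (simp_all add: power2_eq_square algebra_simps)
    finally show ?thesis by simp
  qed
  have u0m: "\<theta> u0 = - u0" unfolding u0_def using vk am by (simp add: th_br neg_r)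
  have u3m: "\<theta> u3 = - u3" unfolding u3_def using D_k[OF vk] D_m[OF am] by (simp add: th_br neg_r)
  have zm: "\<theta> z = - z" unfolding z_def using u0m u3m by (simp add: th_simps)
  have nk: "\<nu> < pi / 2"
  proof -
    have "\<nu>^2 < (pi/2)^2" using nu kap(1) by simp
    thus ?thesis using power_less_imp_less_base[of \<nu> 2 "pi/2"] pi_gt_zero by simp
  qed
  have kk: "kap < (pi/2)^2" by (rule kap(1))
  have c1: "(\<mu> + \<nu>)^2 > kap"
  proof -
    have "(pi/2)^2 \<le> (\<mu> + \<nu>)^2" using mu nu pi_gt_zero by (intro power_mono) linarith+
    thus ?thesis using kk by simp
  qed
  have c2: "(\<mu> - \<nu>)^2 > kap"
  proof -
    have "(pi/2)^2 < (\<mu> - \<nu>)^2" using mu nu nk pi_gt_zero by (intro power_strict_mono) auto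
    thus ?thesis using kk by simp
  qed
  have "z = 0" by (rule inj_m[OF zm zz c1])
  hence "D (D u0) + ((\<mu> - \<nu>)^2) *\<^sub>R u0 = 0" using zeq by simp
  hence "u0 = 0" by (rule inj_m[OF u0m _ c2])
  thus ?thesis unfolding u0_def .
qed

end


lemma lin_lc: "linear f \<Longrightarrow> f (p *\<^sub>R x + q *\<^sub>R y) = p *\<^sub>R f x + q *\<^sub>R f y"
  by (simp add: linear_add linear_scale)

context mainL begin

lemma ideal0:
  assumes ek: "\<theta> e = e" and ec: "\<forall>A. \<theta> A = - A \<longrightarrow> br e A = 0"
  shows "e = 0"
proof -
  define J where "J = {X. \<theta> X = X \<and> (\<forall>A. \<theta> A = - A \<longrightarrow> br X A = 0)}"
  have sJ: "subspace J" unfolding J_def subspace_def by (auto simp: th_simps br_simps)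
  have iJ: "br x y \<in> J" if yJ: "y \<in> J" for x y
  proof -
    define xk where "xk = (1/2) *\<^sub>R (x + \<theta> x)"
    define xm where "xm = (1/2) *\<^sub>R (x - \<theta> x)"
    have xx: "x = xk + xm" unfolding xk_def xm_def by (simp add: algebra_simps scaleR_2[symmetric])
    have xkk: "\<theta> xk = xk" unfolding xk_def by (simp add: th_simps algebra_simps)
    have xmm: "\<theta> xm = - xm" unfolding xm_def by (simp add: th_simps algebra_simps)
    have yk: "\<theta> y = y" and yc: "\<And>A. \<theta> A = - A \<Longrightarrow> br y A = 0" using yJ unfolding J_def by auto
    have "br xm y = 0" using yc[OF xmm] by (metis anti neg_equal_0_iff_equal)
    hence bxy: "br x y = br xk y" using xx by (simp add: add_l)
    have "\<theta> (br xk y) = br xk y" by (simp add: th_br xkk yk)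
    moreover have "br (br xk y) A = 0" if "\<theta> A = - A" for A
    proof -
      have "\<theta> (br xk A) = - br xk A" using that by (simp add: th_br xkk neg_r)
      hence "br y (br xk A) = 0" by (rule yc)
      moreover have "br y A = 0" by (rule yc[OF that])
      ultimately show ?thesis by (simp add: ad_bracket zero_r)
    qed
    ultimately show ?thesis unfolding bxy J_def by blast
  qed
  have siJ: "\<sigma> ` J \<subseteq> J"
  proof
    fix z assume "z \<in> \<sigma> ` J"
    then obtain X where XJ: "X \<in> J" and z: "z = \<sigma> X" by blast
    have Xk: "\<theta> X = X" and Xc: "\<And>A. \<theta> A = - A \<Longrightarrow> br X A = 0" using XJ unfolding J_def by auto
    have "\<theta> z = z" unfolding z using Xk si_th by metis
    moreover have "br z A = 0" if "\<theta> A = - A" for A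
    proof -
      have "\<theta> (\<sigma> A) = - \<sigma> A" using that si_th by (metis si_neg)
      hence "br X (\<sigma> A) = 0" by (rule Xc)
      hence "\<sigma> (br X (\<sigma> A)) = 0" by (simp add: si_0)
      thus ?thesis unfolding z by (simp add: si_br si_si)
    qed
    ultimately show "z \<in> J" unfolding J_def by blast
  qed
  have "lie_ideal br J" unfolding lie_ideal_def using sJ iJ by blast
  hence "J = {0} \<or> J = UNIV" using irred siJ by blast
  moreover have "J \<noteq> UNIV"
  proof
    assume "J = UNIV"
    hence "\<theta> X = X" for X unfolding J_def by blast
    hence "lie_compact br" unfolding lie_compact_def using th_pos by fastforce
    thus False using noncpt by simp
  qed
  ultimately have "J = {0}" by blast
  moreover have "e \<in> J" unfolding J_def using ek ec by blast
  ultimately show ?thesis by blast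
qed

lemma part_b:
  assumes xk: "\<theta> x = x" and ex: "F (F x) = x"
  shows "D x = 0"
proof (rule ccontr)
  assume Dx: "D x \<noteq> 0"
  define U where "U = {w. \<theta> w = w \<and> F (F w) = w}"
  have sU: "subspace U" unfolding U_def subspace_def by (auto simp: th_simps F_simps)
  have iU: "\<forall>w\<in>U. S2 w \<in> U" unfolding U_def by (auto simp: S2_k S2_F)
  have x0: "x \<noteq> 0" using Dx by (auto simp: zero_r)
  have ne: "\<exists>w\<in>U. w \<noteq> 0" using x0 xk ex unfolding U_def by blast
  obtain e l where eU: "e \<in> U" and e0: "e \<noteq> 0" and Se: "S2 e = l *\<^sub>R e"
      and bd: "\<forall>w\<in>U. Bt (S2 w) w \<le> l * Bt w w"
    using ip.max_eig[OF S2_lin sU iU _ ne] S2_sym by blast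
  have ek: "\<theta> e = e" and Ee: "F (F e) = e" using eU unfolding U_def by auto
  have pe: "Bt e e > 0" using ip.pos[OF e0] .
  have xU: "x \<in> U" unfolding U_def using xk ex by blast
  have "Bt (D x) (D x) \<le> l * Bt x x" using bd xU S2_norm by metis
  moreover have "Bt (D x) (D x) > 0" using ip.pos[OF Dx] .
  moreover have "Bt x x \<ge> 0" by (rule ip.nonneg)
  ultimately have l0: "l > 0" by (smt (verit) mult_nonpos_nonneg)
  define \<mu> where "\<mu> = sqrt l"
  have mu: "\<mu> > 0" "\<mu>^2 = l" unfolding \<mu>_def using l0 by simp_all
  have ev: "D (D e) = - (\<mu>^2) *\<^sub>R e" using Se mu unfolding S2_def by (simp add: minus_equation_iff)
  have "Bt (F (F e)) e = cos (2 * \<mu>) * Bt e e" by (rule Ecos[OF ev]) (use mu in simp)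
  hence "(cos (2 * \<mu>) - 1) * Bt e e = 0" using Ee by (simp add: algebra_simps)
  hence "cos (2 * \<mu>) = 1" using pe by simp
  then obtain n :: int where n: "2 * \<mu> = real_of_int n * 2 * pi" using cos_one_2pi_int by blast
  have "n > 0" using n mu pi_gt_zero by (smt (verit) mult_nonpos_nonneg of_int_le_0_iff mult_pos_pos)
  hence "(1::real) \<le> of_int n" by simp
  hence "1 * pi \<le> real_of_int n * pi" using pi_gt_zero by (intro mult_right_mono) auto
  moreover have "\<mu> = real_of_int n * pi" using n by simp
  ultimately have mupi: "\<mu> \<ge> pi" by simp
  have sm: "{w. \<theta> w = - w} \<subseteq> span {a\<in>{w. \<theta> w = - w}. \<exists>c. S2 a = c *\<^sub>R a}"
    by (rule ip.span_eig[OF S2_lin sub_m]) (auto simp: S2_m S2_sym)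
  have gen: "br e a = 0" if ain: "a \<in> {a\<in>{w. \<theta> w = - w}. \<exists>c. S2 a = c *\<^sub>R a}" for a
  proof (cases "a = 0")
    case True thus ?thesis by (simp add: zero_r)
  next
    case False
    obtain c where am: "\<theta> a = - a" and Sa: "S2 a = c *\<^sub>R a" using ain by blast
    have pa: "Bt a a > 0" using ip.pos[OF False] .
    have ca: "c * Bt a a = Bt (D a) (D a)" using S2_norm[of a] Sa by (simp add: ip.B_simps)
    have c0: "c \<ge> 0"
    proof (rule ccontr)
      assume "\<not> c \<ge> 0"
      hence "c * Bt a a < 0" using pa by (simp add: mult_neg_pos)
      thus False using ca ip.nonneg[of "D a"] by simp
    qed
    have "c * Bt a a \<le> kap * Bt a a" using ca kap(2)[OF am] by simp
    hence ck: "c \<le> kap" using pa by (simp add: mult_le_cancel_right)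
    define \<nu> where "\<nu> = sqrt c"
    have nu: "\<nu> \<ge> 0" "\<nu>^2 = c" unfolding \<nu>_def using c0 by simp_all
    have aev: "D (D a) = - (\<nu>^2) *\<^sub>R a" using Sa nu unfolding S2_def by (simp add: minus_equation_iff)
    show ?thesis by (rule Plemma[OF ek ev mupi am aev nu(1)]) (use nu ck in simp)
  qed
  have "span {a\<in>{w. \<theta> w = - w}. \<exists>c. S2 a = c *\<^sub>R a} \<subseteq> {A. br e A = 0}"
  proof (rule span_minimal)
    show "subspace {A. br e A = 0}" unfolding subspace_def by (auto simp: br_simps)
  qed (use gen in blast)
  hence "\<forall>A. \<theta> A = - A \<longrightarrow> br e A = 0" using sm by blast
  hence "e = 0" by (rule ideal0[OF ek])
  thus False using e0 by simp
qed

end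


context mainL begin

lemma Ad_simps: "Ad (a + b) = Ad a + Ad b" "Ad (c *\<^sub>R a) = c *\<^sub>R Ad a" "Ad 0 = 0"
  "Ad (- a) = - Ad a"
  by (simp_all add: linear_add[OF Ad_lin] linear_scale[OF Ad_lin] linear_0[OF Ad_lin] linear_neg[OF Ad_lin])

lemma Finv: "Ad (F x) = x \<and> F (Ad x) = x"
proof -
  define V where "V = {x. Ad (F x) = x \<and> F (Ad x) = x}"
  have sV: "subspace V" unfolding V_def subspace_def by (auto simp: Ad_simps F_simps)
  have sp: "UNIV \<subseteq> span {a\<in>UNIV. \<exists>c. S2 a = c *\<^sub>R a}"
    by (rule ip.span_eig[OF S2_lin]) (auto simp: S2_sym)
  have gen: "a \<in> V" if hyp: "\<exists>c. S2 a = c *\<^sub>R a" for a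
  proof (cases "Bt (D a) (D a) = 0")
    case True
    hence Da: "D a = 0" using ip.B_eq0 by simp
    have "F a = a" by (rule exp_triv) (simp add: neg_l Da)
    moreover have "Ad a = a" by (rule exp_triv) (simp add: Da)
    ultimately show ?thesis unfolding V_def by simp
  next
    case False
    obtain c where Sa: "S2 a = c *\<^sub>R a" using hyp by blast
    have a0: "a \<noteq> 0" using False by (auto simp: zero_r ip.B_simps)
    have pa: "Bt a a > 0" using ip.pos[OF a0] .
    have ca: "c * Bt a a = Bt (D a) (D a)" using S2_norm[of a] Sa by (simp add: ip.B_simps)
    have "Bt (D a) (D a) > 0" using False ip.nonneg[of "D a"] by simp
    hence c0: "c > 0" using ca pa by (smt (verit) mult_nonpos_nonneg)
    define \<mu> where "\<mu> = sqrt c"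
    have mu: "\<mu> > 0" "\<mu>^2 = c" unfolding \<mu>_def using c0 by simp_all
    have ev: "D (D a) = - (\<mu>^2) *\<^sub>R a" using Sa mu unfolding S2_def by (simp add: minus_equation_iff)
    have mu0: "\<mu> \<noteq> 0" using mu by simp
    define s where "s = sin \<mu> / \<mu>"
    have Fa: "F a = cos \<mu> *\<^sub>R a + (- s) *\<^sub>R D a"
      using exp_eig[OF _ _ mu0, of "- Y" a "- D a"] unfolding s_def by (simp add: neg_l neg_r ev)
    have FDa: "F (D a) = (s * \<mu>^2) *\<^sub>R a + cos \<mu> *\<^sub>R D a"
      using exp_eig[OF _ _ mu0, of "- Y" "D a" "(\<mu>^2) *\<^sub>R a"] unfolding s_def
      by (simp add: neg_l neg_r ev scale_r add.commute)
    have Ada: "Ad a = cos \<mu> *\<^sub>R a + s *\<^sub>R D a"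
      using exp_eig[OF _ _ mu0, of Y a "D a"] unfolding s_def by (simp add: ev)
    have AdDa: "Ad (D a) = (- (s * \<mu>^2)) *\<^sub>R a + cos \<mu> *\<^sub>R D a"
      using exp_eig[OF _ _ mu0, of Y "D a" "D (D a)"] unfolding s_def
      by (simp add: ev scale_r neg_r add.commute)
    have sm: "s * s * \<mu>^2 = (sin \<mu>)^2" unfolding s_def using mu0 by (simp add: power2_eq_square)
    have one: "cos \<mu> * cos \<mu> + s * s * \<mu>^2 = 1" using sm sin_cos_squared_add2[of \<mu>]
      by (simp add: power2_eq_square)
    have "Ad (F a) = (cos \<mu> * cos \<mu> + (- s) * (- (s * \<mu>^2))) *\<^sub>R a + (cos \<mu> * s + (- s) * cos \<mu>) *\<^sub>R D a"
      unfolding Fa lin_lc[OF Ad_lin] Ada AdDa lc_scale lc_add by simp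
    also have "\<dots> = 1 *\<^sub>R a + 0 *\<^sub>R D a" by (rule lc_eq) (use one in \<open>simp_all add: algebra_simps\<close>)
    finally have 1: "Ad (F a) = a" by simp
    have "F (Ad a) = (cos \<mu> * cos \<mu> + s * (s * \<mu>^2)) *\<^sub>R a + (cos \<mu> * (- s) + s * cos \<mu>) *\<^sub>R D a"
      unfolding Ada lin_lc[OF F_lin] Fa FDa lc_scale lc_add by simp
    also have "\<dots> = 1 *\<^sub>R a + 0 *\<^sub>R D a" by (rule lc_eq) (use one in \<open>simp_all add: algebra_simps\<close>)
    finally have 2: "F (Ad a) = a" by simp
    show ?thesis unfolding V_def using 1 2 by simp
  qed
  have "span {a\<in>UNIV. \<exists>c. S2 a = c *\<^sub>R a} \<subseteq> V" by (rule span_minimal) (use gen sV in auto)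
  hence "x \<in> V" using sp by blast
  thus ?thesis unfolding V_def by simp
qed

lemma fixed_iff: "F (F (\<theta> X)) = X \<longleftrightarrow> (\<theta> X = X \<and> D X = 0)"
proof
  assume "\<theta> X = X \<and> D X = 0"
  moreover hence "F X = X" by (intro exp_triv) (simp add: neg_l)
  ultimately show "F (F (\<theta> X)) = X" by simp
next
  assume h: "F (F (\<theta> X)) = X"
  define Xk where "Xk = (1/2) *\<^sub>R (X + \<theta> X)"
  define Xm where "Xm = (1/2) *\<^sub>R (X - \<theta> X)"
  have xx: "X = Xk + Xm" unfolding Xk_def Xm_def by (simp add: algebra_simps scaleR_2[symmetric])
  have tx: "\<theta> X = Xk - Xm" unfolding Xk_def Xm_def by (simp add: algebra_simps scaleR_2[symmetric])
  have xkk: "\<theta> Xk = Xk" unfolding Xk_def by (simp add: th_simps algebra_simps)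
  have xmm: "\<theta> Xm = - Xm" unfolding Xm_def by (simp add: th_simps algebra_simps)
  have e1: "F (F Xk) - F (F Xm) = Xk + Xm" using h unfolding tx by (simp add: F_simps xx[symmetric])
  have ek: "\<theta> (F (F Xk)) = F (F Xk)" by (simp add: F_th xkk)
  have em: "\<theta> (F (F Xm)) = - F (F Xm)" by (simp add: F_th xmm F_simps)
  have e2: "F (F Xk) + F (F Xm) = Xk - Xm"
  proof -
    have "\<theta> (F (F Xk) - F (F Xm)) = \<theta> (Xk + Xm)" using e1 by simp
    thus ?thesis using ek em xkk xmm by (simp add: th_simps)
  qed
  have "(2::real) *\<^sub>R F (F Xk) = 2 *\<^sub>R Xk" using e1 e2 by (simp add: scaleR_2 algebra_simps)
  hence Ek: "F (F Xk) = Xk" by simp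
  have e3: "F (F Xk) = Xk + Xm + F (F Xm)" using e1 diff_eq_eq by metis
  have "Xk + Xm + F (F Xm) + F (F Xm) = Xk - Xm" using e2 e3 by simp
  hence "(F (F Xm) + F (F Xm)) + (Xm + Xm) = 0" by (simp add: add_ac)
  hence "F (F Xm) + F (F Xm) = - (Xm + Xm)" by (simp only: eq_neg_iff_add_eq_0)
  hence "(2::real) *\<^sub>R F (F Xm) = 2 *\<^sub>R (- Xm)" by (simp add: scaleR_2)
  hence Em: "F (F Xm) = - Xm" using scaleR_cancel_left[of 2 "F (F Xm)" "- Xm"] by simp
  have "Xm = 0" by (rule part_a[OF xmm Em])
  moreover have "D Xk = 0" by (rule part_b[OF xkk Ek])
  ultimately show "\<theta> X = X \<and> D X = 0" using xx xkk by simp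
qed

end


theorem lemma2:
  fixes br :: "'g::euclidean_space \<Rightarrow> 'g \<Rightarrow> 'g"
    and \<sigma> \<theta> :: "'g \<Rightarrow> 'g" and t :: "'g set" and Y :: 'g
  defines "k \<equiv> eig1 \<theta>" and "m \<equiv> eigm1 \<theta>" and "h \<equiv> eig1 \<sigma>" and "q \<equiv> eigm1 \<sigma>"
  defines "h' \<equiv> eig1 (\<sigma> \<circ> \<theta>)" and "q' \<equiv> eigm1 (\<sigma> \<circ> \<theta>)"
  defines "Ad \<equiv> exp_ad br Y" and "Adinv \<equiv> exp_ad br (- Y)"
  defines "\<sigma>a \<equiv> Ad \<circ> \<sigma> \<circ> Adinv" and "\<tau> \<equiv> \<sigma> \<circ> \<theta>"
  assumes ss: "semisimple br"
    and sig: "lie_involution br \<sigma>"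
    and cart: "cartan_involution br \<theta>"
    and comm: "\<sigma> \<circ> \<theta> = \<theta> \<circ> \<sigma>"
    and noncpt: "\<not> lie_compact br"
    and irred: "\<forall>I. lie_ideal br I \<and> \<sigma> ` I \<subseteq> I \<longrightarrow> I = {0} \<or> I = UNIV"
    and tmax: "max_abelian br t (k \<inter> q)"
    and Yt: "Y \<in> t_plus br t m"
  shows "{X. \<tau> (\<sigma>a X) = X} = {X \<in> k. br Y X = 0}
     \<and> {X. \<tau> (\<sigma>a X) = X} = {A + B | A B. A \<in> h' \<inter> Ad ` h \<and> B \<in> q' \<inter> Ad ` q}
     \<and> (h' \<inter> Ad ` h) \<inter> (q' \<inter> Ad ` q) = {0}
     \<and> h' \<inter> Ad ` h \<subseteq> k \<and> q' \<inter> Ad ` q \<subseteq> k"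
proof -
  have lb: "lie_bracket br" using ss unfolding semisimple_def by blast
  interpret M: mainL br \<sigma> \<theta> t Y
    unfolding mainL_def mainL_axioms_def lieB_def
    using lb sig cart comm noncpt irred tmax Yt unfolding k_def q_def m_def by blast
  have key: "\<tau> (\<sigma>a X) = Adinv (Adinv (\<theta> X))" for X
  proof -
    have "\<tau> (\<sigma>a X) = \<sigma> (\<theta> (Ad (\<sigma> (Adinv X))))" unfolding \<tau>_def \<sigma>a_def by simp
    also have "\<dots> = \<sigma> (\<theta> (Ad (Ad (\<sigma> X))))" unfolding Ad_def Adinv_def by (simp add: M.F_si)
    also have "\<dots> = \<sigma> (Ad (Ad (\<theta> (\<sigma> X))))" unfolding Ad_def by (simp add: M.Ad_th)
    also have "\<dots> = Adinv (Adinv (\<sigma> (\<theta> (\<sigma> X))))" unfolding Ad_def Adinv_def by (simp add: M.Ad_si)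
    also have "\<sigma> (\<theta> (\<sigma> X)) = \<theta> X" by (simp add: M.si_th M.si_si)
    finally show ?thesis .
  qed
  have P1: "{X. \<tau> (\<sigma>a X) = X} = {X \<in> k. br Y X = 0}"
    using key M.fixed_iff unfolding k_def eig1_def Adinv_def by auto
  have P2: "{X. \<tau> (\<sigma>a X) = X} = {A + B | A B. A \<in> h' \<inter> Ad ` h \<and> B \<in> q' \<inter> Ad ` q}"
  proof
    show "{X. \<tau> (\<sigma>a X) = X} \<subseteq> {A + B | A B. A \<in> h' \<inter> Ad ` h \<and> B \<in> q' \<inter> Ad ` q}"
    proof
      fix X assume "X \<in> {X. \<tau> (\<sigma>a X) = X}"
      hence Xk: "\<theta> X = X" and DX: "br Y X = 0" using P1 unfolding k_def eig1_def by auto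
      define A where "A = (1/2) *\<^sub>R (X + \<sigma> X)"
      define B where "B = (1/2) *\<^sub>R (X - \<sigma> X)"
      have XAB: "X = A + B" unfolding A_def B_def by (simp add: algebra_simps scaleR_2[symmetric])
      have tsX: "\<theta> (\<sigma> X) = \<sigma> X" using Xk M.si_th by metis
      have DsX: "br Y (\<sigma> X) = 0"
      proof -
        have "br Y (\<sigma> X) = \<sigma> (br (\<sigma> Y) X)" by (simp add: M.si_br M.si_si)
        also have "\<dots> = 0" by (simp add: M.siY M.neg_l DX M.si_simps)
        finally show ?thesis .
      qed
      have sA: "\<sigma> A = A" unfolding A_def by (simp add: M.si_simps algebra_simps)
      have sB: "\<sigma> B = - B" unfolding B_def by (simp add: M.si_simps algebra_simps)
      have tA: "\<theta> A = A" unfolding A_def by (simp add: M.th_simps Xk tsX)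
      have tB: "\<theta> B = B" unfolding B_def by (simp add: M.th_simps Xk tsX)
      have DA: "br Y A = 0" unfolding A_def by (simp add: M.br_simps DX DsX)
      have DB: "br Y B = 0" unfolding B_def by (simp add: M.br_simps DX DsX)
      have AdA: "Ad A = A" unfolding Ad_def by (rule M.exp_triv[OF DA])
      have AdB: "Ad B = B" unfolding Ad_def by (rule M.exp_triv[OF DB])
      have "A \<in> h' \<inter> Ad ` h" unfolding h'_def h_def eig1_def using sA tA AdA
        by (auto intro!: image_eqI[of A Ad A])
      moreover have "B \<in> q' \<inter> Ad ` q" unfolding q'_def q_def eigm1_def using sB tB AdB
        by (auto intro!: image_eqI[of B Ad B])
      ultimately show "X \<in> {A + B | A B. A \<in> h' \<inter> Ad ` h \<and> B \<in> q' \<inter> Ad ` q}" using XAB by blast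
    qed
  next
    show "{A + B | A B. A \<in> h' \<inter> Ad ` h \<and> B \<in> q' \<inter> Ad ` q} \<subseteq> {X. \<tau> (\<sigma>a X) = X}"
    proof
      fix X assume "X \<in> {A + B | A B. A \<in> h' \<inter> Ad ` h \<and> B \<in> q' \<inter> Ad ` q}"
      then obtain A B Z Z' where X: "X = A + B" and tA: "\<sigma> (\<theta> A) = A" and tB: "\<sigma> (\<theta> B) = - B"
        and A: "A = Ad Z" and sZ: "\<sigma> Z = Z" and B: "B = Ad Z'" and sZ': "\<sigma> Z' = - Z'"
        unfolding h'_def q'_def h_def q_def eig1_def eigm1_def by auto
      have FA: "Adinv A = Z" unfolding A Ad_def Adinv_def using M.Finv by blast
      have FB: "Adinv B = Z'" unfolding B Ad_def Adinv_def using M.Finv by blast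
      have FAB: "Adinv X = Z + Z'" unfolding X Adinv_def using FA FB unfolding Adinv_def
        by (simp add: M.F_simps)
      have "\<sigma>a X = Ad (Z - Z')" unfolding \<sigma>a_def using FAB sZ sZ' by (simp add: M.si_simps)
      also have "\<dots> = A - B" unfolding A B Ad_def by (simp add: linear_diff[OF M.Ad_lin])
      finally have "\<sigma>a X = A - B" .
      hence "\<tau> (\<sigma>a X) = A + B" unfolding \<tau>_def using tA tB by (simp add: M.si_simps M.th_simps)
      thus "X \<in> {X. \<tau> (\<sigma>a X) = X}" using X by simp
    qed
  qed
  have P3: "(h' \<inter> Ad ` h) \<inter> (q' \<inter> Ad ` q) = {0}"
  proof
    show "(h' \<inter> Ad ` h) \<inter> (q' \<inter> Ad ` q) \<subseteq> {0}"
    proof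
      fix X assume "X \<in> (h' \<inter> Ad ` h) \<inter> (q' \<inter> Ad ` q)"
      hence "X = - X" unfolding h'_def q'_def eig1_def eigm1_def by auto
      hence "X + X = 0" by (metis add.right_inverse)
      hence "(2::real) *\<^sub>R X = 0" by (simp add: scaleR_2)
      thus "X \<in> {0}" by simp
    qed
  next
    have "Ad 0 = 0" unfolding Ad_def by (rule linear_0[OF M.Ad_lin])
    moreover have "(0::'g) \<in> h" "(0::'g) \<in> q" unfolding h_def q_def eig1_def eigm1_def by (simp_all add: M.si_0)
    moreover have "(0::'g) \<in> h'" "(0::'g) \<in> q'" unfolding h'_def q'_def eig1_def eigm1_def
      by (simp_all add: M.si_0 M.th_0)
    ultimately show "{0} \<subseteq> (h' \<inter> Ad ` h) \<inter> (q' \<inter> Ad ` q)" by (metis IntI empty_subsetI image_eqI insert_subset)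
  qed
  have zh: "(0::'g) \<in> h' \<inter> Ad ` h" "(0::'g) \<in> q' \<inter> Ad ` q" using P3 by auto
  have P4a: "h' \<inter> Ad ` h \<subseteq> k"
  proof
    fix A assume "A \<in> h' \<inter> Ad ` h"
    hence "A + 0 \<in> {A + B | A B. A \<in> h' \<inter> Ad ` h \<and> B \<in> q' \<inter> Ad ` q}" using zh by blast
    thus "A \<in> k" using P1 P2 by auto
  qed
  have P4b: "q' \<inter> Ad ` q \<subseteq> k"
  proof
    fix B assume "B \<in> q' \<inter> Ad ` q"
    hence "0 + B \<in> {A + B | A B. A \<in> h' \<inter> Ad ` h \<and> B \<in> q' \<inter> Ad ` q}" using zh by blast
    thus "B \<in> k" using P1 P2 by auto
  qed
  show ?thesis using P1 P2 P3 P4a P4b by blast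
qed


end
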